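(* Let $\kappa\ge 2$, let $\psi^+$ be a rooted binary topological tree on a taxon set $X$, and let $a,b,c,d\in X$ be distinct taxa such that the unrooted topology of $\psi^+|_{\{a,b,c,d\}}$ is the quartet $ab|cd$. For $P\in\mathrm{UE}_\kappa(\psi^+)$ let $\tilde P=P_{\{a,b,c,d\}}$. Then for all $P\in\mathrm{UE}_\kappa(\psi^+)$, $\operatorname{Flat}_{ab|cd}(\tilde P)$ has rank at most $\binom{\kappa+1}{2}$, while for generic $P\in\mathrm{UE}_\kappa(\psi^+)$ both $\operatorname{Flat}_{ac|bd}(\tilde P)$ and $\operatorname{Flat}_{ad|bc}(\tilde P)$ have rank $\kappa^2$.
   Context: A $\kappa$-state site pattern probability tensor on a finite taxon set $X$ is an $|X|$-way $\kappa\times\cdots\times\kappa$ real array with one index per taxon, non-negative entries summing to 1. $P_Y$ denotes marginalization to taxa $Y\subseteq X$; $\psi^+|_Y$ is the induced rooted subtree. A 2-clade of a rooted tree is a pair of leaves that are exactly the leaf descendants of some vertex. $\mathrm{UE}_\kappa(\psi^+)$ is the set of all such tensors $P$ such that for every $Y\subseteq X$ and every 2-clade $\{a,b\}$ of $\psi^+|_Y$, $P_Y$ is invariant under exchanging the $a$ and $b$ indices. For a 4-way $\kappa\times\kappa\times\kappa\times\kappa$ array $\tilde P$ with indices corresponding to taxa $a,b,c,d$, the flattening $\operatorname{Flat}_{ab|cd}(\tilde P)$ is the $\kappa^2\times\kappa^2$ matrix with rows indexed by pairs $(i,j)$ of states of $a,b$, columns indexed by pairs $(k,l)$ of states of $c,d$,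 and $((i,j),(k,l))$-entry $\tilde P(i,j,k,l)$; $\operatorname{Flat}_{ac|bd}$ and $\operatorname{Flat}_{ad|bc}$ are defined analogously, with rows indexed by the states of the first pair of taxa and columns by the states of the second pair. "Generic" means: outside a subset of measure zero (a proper algebraic subset) of $\mathrm{UE}_\kappa(\psi^+)$. *)

theory Defs
  imports "HOL-Library.FuncSet" "Jordan_Normal_Form.DL_Rank"
begin

datatype 'a rtree = Leaf 'a | Node "'a rtree" "'a rtree"

fun leaves_list :: "'a rtree \<Rightarrow> 'a list" where
  "leaves_list (Leaf x) = [x]"
| "leaves_list (Node l r) = leaves_list l @ leaves_list r"

definition leaves :: "'a rtree \<Rightarrow> 'a set" where
  "leaves T = set (leaves_list T)"

text \<open>A rooted binary topological tree on its taxon set: leaf labels distinct.\<close>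
definition well_labelled :: "'a rtree \<Rightarrow> bool" where
  "well_labelled T \<longleftrightarrow> distinct (leaves_list T)"

fun subtrees :: "'a rtree \<Rightarrow> 'a rtree set" where
  "subtrees (Leaf x) = {Leaf x}"
| "subtrees (Node l r) = insert (Node l r) (subtrees l \<union> subtrees r)"

definition clusters :: "'a rtree \<Rightarrow> 'a set set" where
  "clusters T = leaves ` subtrees T"

definition two_clades :: "'a rtree \<Rightarrow> 'a set set" where
  "two_clades T = {C \<in> clusters T. card C = 2}"

text \<open>Induced rooted subtree on Y (degree-2 vertices suppressed); None if Y misses all leaves.\<close>
fun induced :: "'a rtree \<Rightarrow> 'a set \<Rightarrow> 'a rtree option" where
  "induced (Leaf x) Y = (if x \<in> Y then Some (Leaf x) else None)"
| "induced (Node l r) Y =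
     (case (induced l Y, induced r Y) of
        (Some l', Some r') \<Rightarrow> Some (Node l' r')
      | (Some l', None) \<Rightarrow> Some l'
      | (None, Some r') \<Rightarrow> Some r'
      | (None, None) \<Rightarrow> None)"

definition unrooted_splits :: "'a rtree \<Rightarrow> 'a set set set" where
  "unrooted_splits T = {{C, leaves T - C} | C. C \<in> clusters T \<and> C \<noteq> leaves T}"

definition quartet_topology :: "'a rtree \<Rightarrow> 'a \<Rightarrow> 'a \<Rightarrow> 'a \<Rightarrow> 'a \<Rightarrow> bool" where
  "quartet_topology T a b c d \<longleftrightarrow>
     (\<exists>T'. induced T {a,b,c,d} = Some T' \<and> {{a,b},{c,d}} \<in> unrooted_splits T')"

text \<open>A tensor indexed by Y with kappa states: a real function on assignments Y \<rightarrow> {..<kappa}.\<close>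
definition assignments :: "'a set \<Rightarrow> nat \<Rightarrow> ('a \<Rightarrow> nat) set" where
  "assignments Y \<kappa> = (Y \<rightarrow>\<^sub>E {..<\<kappa>})"

definition is_prob_tensor :: "nat \<Rightarrow> 'a set \<Rightarrow> (('a \<Rightarrow> nat) \<Rightarrow> real) \<Rightarrow> bool" where
  "is_prob_tensor \<kappa> X P \<longleftrightarrow>
     (\<forall>s \<in> assignments X \<kappa>. P s \<ge> 0) \<and>
     (\<forall>s. s \<notin> assignments X \<kappa> \<longrightarrow> P s = 0) \<and>
     (\<Sum>s \<in> assignments X \<kappa>. P s) = 1"

definition marg :: "'a set \<Rightarrow> nat \<Rightarrow> (('a \<Rightarrow> nat) \<Rightarrow> real) \<Rightarrow> 'a set \<Rightarrow> ('a \<Rightarrow> nat) \<Rightarrow> real" where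
  "marg X \<kappa> P Y = (\<lambda>s. if s \<in> assignments Y \<kappa>
       then (\<Sum>t \<in> {t \<in> assignments X \<kappa>. restrict t Y = s}. P t) else 0)"

definition swap_idx :: "('a \<Rightarrow> nat) \<Rightarrow> 'a \<Rightarrow> 'a \<Rightarrow> ('a \<Rightarrow> nat)" where
  "swap_idx s x y = s(x := s y, y := s x)"

definition UE :: "nat \<Rightarrow> 'a rtree \<Rightarrow> (('a \<Rightarrow> nat) \<Rightarrow> real) set" where
  "UE \<kappa> T = {P. is_prob_tensor \<kappa> (leaves T) P \<and>
     (\<forall>Y T'. Y \<subseteq> leaves T \<longrightarrow> induced T Y = Some T' \<longrightarrow>
        (\<forall>x y. {x, y} \<in> two_clades T' \<longrightarrow>
           (\<forall>s \<in> assignments Y \<kappa>.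
              marg (leaves T) \<kappa> P Y (swap_idx s x y) = marg (leaves T) \<kappa> P Y s)))}"

definition asg4 :: "'a \<Rightarrow> 'a \<Rightarrow> 'a \<Rightarrow> 'a \<Rightarrow> nat \<Rightarrow> nat \<Rightarrow> nat \<Rightarrow> nat \<Rightarrow> 'a \<Rightarrow> nat" where
  "asg4 x y z w i j k l = (\<lambda>t. if t = x then i else if t = y then j
      else if t = z then k else if t = w then l else undefined)"

text \<open>Flat_{xy|zw}: rows (i,j) (encoded i*kappa+j) for states of x,y; columns (k,l) for z,w.\<close>
definition flat :: "nat \<Rightarrow> (('a \<Rightarrow> nat) \<Rightarrow> real) \<Rightarrow> 'a \<Rightarrow> 'a \<Rightarrow> 'a \<Rightarrow> 'a \<Rightarrow> real mat" where
  "flat \<kappa> P x y z w = mat (\<kappa> * \<kappa>) (\<kappa> * \<kappa>)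
     (\<lambda>(r, c). P (asg4 x y z w (r div \<kappa>) (r mod \<kappa>) (c div \<kappa>) (c mod \<kappa>)))"

definition mat_rank :: "real mat \<Rightarrow> nat" where
  "mat_rank A = vec_space.rank (dim_row A) A"

inductive_set poly_fun :: "(('b \<Rightarrow> real) \<Rightarrow> real) set" where
  const: "(\<lambda>P. c) \<in> poly_fun"
| coord: "(\<lambda>P. P s) \<in> poly_fun"
| add: "f \<in> poly_fun \<Longrightarrow> g \<in> poly_fun \<Longrightarrow> (\<lambda>P. f P + g P) \<in> poly_fun"
| mult: "f \<in> poly_fun \<Longrightarrow> g \<in> poly_fun \<Longrightarrow> (\<lambda>P. f P * g P) \<in> poly_fun"

text \<open>Q holds generically on S: outside a proper algebraic subset of S.\<close>
definition generic_on :: "(('b \<Rightarrow> real) set) \<Rightarrow> (('b \<Rightarrow> real) \<Rightarrow> bool) \<Rightarrow> bool" where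
  "generic_on S Q \<longleftrightarrow>
     (\<exists>f \<in> poly_fun. (\<exists>P \<in> S. f P \<noteq> 0) \<and> (\<forall>P \<in> S. f P \<noteq> 0 \<longrightarrow> Q P))"

end

theory Submission
  imports Defs
begin


lemma leaves_Leaf[simp]: "leaves (Leaf x) = {x}" by (simp add: leaves_def)
lemma leaves_Node[simp]: "leaves (Node l r) = leaves l \<union> leaves r" by (simp add: leaves_def)
lemma finite_leaves[simp]: "finite (leaves T)" by (simp add: leaves_def)
lemma leaves_ne: "leaves T \<noteq> {}" by (induction T) auto

lemma wl_Node: "well_labelled (Node l r) \<Longrightarrow> well_labelled l \<and> well_labelled r \<and> leaves l \<inter> leaves r = {}"
  by (simp add: well_labelled_def leaves_def)

lemma subtrees_self: "T \<in> subtrees T" by (cases T) auto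

lemma subtrees_leaves: "S \<in> subtrees T \<Longrightarrow> leaves S \<subseteq> leaves T"
  by (induction T) auto

lemma induced_leaves:
  "(\<forall>T'. induced T Y = Some T' \<longrightarrow> leaves T' = leaves T \<inter> Y) \<and> (induced T Y = None \<longrightarrow> leaves T \<inter> Y = {})"
proof (induction T)
  case (Leaf x) then show ?case by auto
next
  case (Node l r)
  have LI: "leaves (Node l r) \<inter> Y = (leaves l \<inter> Y) \<union> (leaves r \<inter> Y)" by auto
  show ?case
  proof (cases "induced l Y")
    case None note N = None
    show ?thesis
    proof (cases "induced r Y")
      case None
      have "induced (Node l r) Y = None" using N None by simp
      moreover have "leaves (Node l r) \<inter> Y = {}" unfolding LI using N None Node.IH by blast
      ultimately show ?thesis by simp
    next
      case (Some r')
      have "induced (Node l r) Y = Some r'" using N Some by simp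
      moreover have "leaves r' = leaves (Node l r) \<inter> Y" unfolding LI using N Some Node.IH by blast
      ultimately show ?thesis by simp
    qed
  next
    case (Some l') note S = Some
    show ?thesis
    proof (cases "induced r Y")
      case None
      have "induced (Node l r) Y = Some l'" using S None by simp
      moreover have "leaves l' = leaves (Node l r) \<inter> Y" unfolding LI using S None Node.IH by blast
      ultimately show ?thesis by simp
    next
      case (Some r')
      have "induced (Node l r) Y = Some (Node l' r')" using S Some by simp
      moreover have "leaves (Node l' r') = leaves (Node l r) \<inter> Y" unfolding LI leaves_Node using S Some Node.IH by blast
      ultimately show ?thesis by simp
    qed
  qed
qed

lemma induced_leaves1: "induced T Y = Some T' \<Longrightarrow> leaves T' = leaves T \<inter> Y"
  using induced_leaves by blast
lemma induced_leaves2: "induced T Y = None \<Longrightarrow> leaves T \<inter> Y = {}"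
  using induced_leaves by blast

lemma clusters_induced:
  "induced T Y = Some T' \<Longrightarrow> C \<in> clusters T' \<Longrightarrow> \<exists>S\<in>subtrees T. leaves S \<inter> Y = C"
proof (induction T arbitrary: T')
  case (Leaf x) then show ?case by (auto simp: clusters_def split: if_splits)
next
  case (Node l r)
  show ?case
  proof (cases "induced l Y")
    case None note Nl = None
    show ?thesis
    proof (cases "induced r Y")
      case None with Nl Node.prems show ?thesis by simp
    next
      case (Some r')
      with Nl Node.prems have "T' = r'" by simp
      from Node.IH(2)[OF Some] Node.prems(2) this obtain S where "S \<in> subtrees r" "leaves S \<inter> Y = C" by blast
      then show ?thesis by auto
    qed
  next
    case (Some l') note Sl = Some
    show ?thesis
    proof (cases "induced r Y")
      case None
      with Sl Node.prems have "T' = l'" by simp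
      from Node.IH(1)[OF Sl] Node.prems(2) this obtain S where "S \<in> subtrees l" "leaves S \<inter> Y = C" by blast
      then show ?thesis by auto
    next
      case (Some r')
      with Sl Node.prems have T': "T' = Node l' r'" by simp
      from Node.prems(2) T' have "C = leaves (Node l' r') \<or> C \<in> clusters l' \<or> C \<in> clusters r'"
        by (auto simp: clusters_def)
      then show ?thesis
      proof (elim disjE)
        assume "C = leaves (Node l' r')"
        then have "leaves (Node l r) \<inter> Y = C" using induced_leaves1[OF Sl] induced_leaves1[OF Some] by auto
        then show ?thesis by auto
      next
        assume "C \<in> clusters l'"
        from Node.IH(1)[OF Sl this] obtain S where "S \<in> subtrees l" "leaves S \<inter> Y = C" by blast
        then show ?thesis by auto
      next
        assume "C \<in> clusters r'"
        from Node.IH(2)[OF Some this] obtain S where "S \<in> subtrees r" "leaves S \<inter> Y = C" by blast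
        then show ?thesis by auto
      qed
    qed
  qed
qed

lemma cherry_node:
  assumes "leaves S \<inter> Y = {x, y}" "x \<noteq> y"
  shows "\<exists>l r. Node l r \<in> subtrees S \<and> ((leaves l \<inter> Y = {x} \<and> leaves r \<inter> Y = {y}) \<or> (leaves l \<inter> Y = {y} \<and> leaves r \<inter> Y = {x}))"
  using assms
proof (induction S)
  case (Leaf z)
  then have "{z} \<inter> Y = {x,y}" by simp
  then have "x \<in> {z}" "y \<in> {z}" by blast+
  with Leaf show ?case by simp
next
  case (Node l r)
  show ?case
  proof (cases "leaves l \<inter> Y = {x,y}")
    case True
    from Node.IH(1)[OF True Node.prems(2)] obtain l' r' where
      h: "Node l' r' \<in> subtrees l" "(leaves l' \<inter> Y = {x} \<and> leaves r' \<inter> Y = {y}) \<or> (leaves l' \<inter> Y = {y} \<and> leaves r' \<inter> Y = {x})" by blast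
    then have "Node l' r' \<in> subtrees (Node l r)" by simp
    with h(2) show ?thesis by blast
  next
    case F1: False
    show ?thesis
    proof (cases "leaves r \<inter> Y = {x,y}")
      case True
      from Node.IH(2)[OF True Node.prems(2)] obtain l' r' where
        h: "Node l' r' \<in> subtrees r" "(leaves l' \<inter> Y = {x} \<and> leaves r' \<inter> Y = {y}) \<or> (leaves l' \<inter> Y = {y} \<and> leaves r' \<inter> Y = {x})" by blast
      then have "Node l' r' \<in> subtrees (Node l r)" by simp
      with h(2) show ?thesis by blast
    next
      case False
      have u: "(leaves l \<inter> Y) \<union> (leaves r \<inter> Y) = {x,y}" using Node.prems by auto
      define A where "A = leaves l \<inter> Y"
      define B where "B = leaves r \<inter> Y"
      have u': "A \<union> B = {x,y}" "A \<noteq> {x,y}" "B \<noteq> {x,y}" using u F1 False by (auto simp: A_def B_def)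
      have sub: "A \<subseteq> {x,y}" "B \<subseteq> {x,y}" using u'(1) by auto
      have "(A = {x} \<and> B = {y}) \<or> (A = {y} \<and> B = {x})"
      proof (cases "x \<in> A")
        case True
        have "y \<notin> A" using sub(1) True u'(2) by auto
        then have "y \<in> B" using u'(1) by auto
        have "A = {x}" using sub(1) True \<open>y \<notin> A\<close> by auto
        moreover have "B = {y}" using sub(2) \<open>y \<in> B\<close> u'(3) by auto
        ultimately show ?thesis by simp
      next
        case False
        then have "x \<in> B" using u'(1) by auto
        have "y \<notin> B" using sub(2) \<open>x \<in> B\<close> u'(3) by auto
        then have "y \<in> A" using u'(1) by auto
        have "A = {y}" using sub(1) False \<open>y \<in> A\<close> u'(2) by auto
        moreover have "B = {x}" using sub(2) \<open>x \<in> B\<close> \<open>y \<notin> B\<close> by auto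
        ultimately show ?thesis by simp
      qed
      then have "(leaves l \<inter> Y = {x} \<and> leaves r \<inter> Y = {y}) \<or> (leaves l \<inter> Y = {y} \<and> leaves r \<inter> Y = {x})"
        by (simp add: A_def B_def)
      then show ?thesis using subtrees_self[of "Node l r"] by blast
    qed
  qed
qed


definition Mk :: "nat \<Rightarrow> nat \<Rightarrow> nat \<Rightarrow> real" where
  "Mk \<kappa> z y = (if z = y then 1/2 else 0) + 1 / (2 * real \<kappa>)"

definition Em :: "nat \<Rightarrow> nat \<Rightarrow> nat \<Rightarrow> nat \<Rightarrow> real" where
  "Em \<kappa> d z y = (if d = 0 then (if z = y then 1 else 0) else Mk \<kappa> z y)"

fun Lm :: "nat \<Rightarrow> ('a rtree \<Rightarrow> nat) \<Rightarrow> 'a set \<Rightarrow> 'a rtree \<Rightarrow> nat \<Rightarrow> ('a \<Rightarrow> nat) \<Rightarrow> real" where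
  "Lm \<kappa> h Y (Leaf x) z s = (if x \<in> Y then (if z = s x then 1 else 0) else 1)"
| "Lm \<kappa> h Y (Node l r) z s =
     (\<Sum>y<\<kappa>. Em \<kappa> (h (Node l r) - h l) z y * Lm \<kappa> h Y l y s) *
     (\<Sum>y<\<kappa>. Em \<kappa> (h (Node l r) - h r) z y * Lm \<kappa> h Y r y s)"

lemma Mk_nonneg: "Mk \<kappa> z y \<ge> 0" by (simp add: Mk_def)
lemma Em_nonneg: "Em \<kappa> d z y \<ge> 0" by (simp add: Em_def Mk_nonneg)

lemma Lm_nonneg: "Lm \<kappa> h Y T z s \<ge> 0"
  by (induction T arbitrary: z) (auto intro!: mult_nonneg_nonneg sum_nonneg Em_nonneg)

lemma Mk_rowsum: assumes "z < \<kappa>" shows "(\<Sum>y<\<kappa>. Mk \<kappa> z y) = 1"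
proof -
  have k: "real \<kappa> > 0" using assms by simp
  have "(\<Sum>y<\<kappa>. Mk \<kappa> z y) = (\<Sum>y<\<kappa>. (if z = y then 1/2 else 0)) + (\<Sum>y<\<kappa>. 1 / (2 * real \<kappa>))"
    by (simp add: Mk_def sum.distrib)
  also have "\<dots> = 1/2 + real \<kappa> * (1 / (2 * real \<kappa>))" using assms by simp
  also have "\<dots> = 1" using k by simp
  finally show ?thesis .
qed

lemma Em_rowsum: assumes "z < \<kappa>" shows "(\<Sum>y<\<kappa>. Em \<kappa> d z y) = 1"
proof (cases "d = 0")
  case True then show ?thesis using assms by (simp add: Em_def)
next
  case False then show ?thesis using Mk_rowsum[OF assms] by (simp add: Em_def)
qed

lemma Lm_cong: "(\<And>x. x \<in> Y \<Longrightarrow> x \<in> leaves T \<Longrightarrow> s x = s' x) \<Longrightarrow> Lm \<kappa> h Y T z s = Lm \<kappa> h Y T z s'"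
proof (induction T arbitrary: z)
  case (Leaf x) then show ?case by simp
next
  case (Node l r)
  have "\<And>y. Lm \<kappa> h Y l y s = Lm \<kappa> h Y l y s'" using Node.IH(1) Node.prems by simp
  moreover have "\<And>y. Lm \<kappa> h Y r y s = Lm \<kappa> h Y r y s'" using Node.IH(2) Node.prems by simp
  ultimately show ?case by simp
qed

lemma Lm_Ycong: "Y \<inter> leaves T = Y' \<inter> leaves T \<Longrightarrow> Lm \<kappa> h Y T z s = Lm \<kappa> h Y' T z s"
proof (induction T arbitrary: z)
  case (Leaf x) then show ?case by auto
next
  case (Node l r)
  have "Y \<inter> leaves l = Y' \<inter> leaves l" "Y \<inter> leaves r = Y' \<inter> leaves r" using Node.prems by auto
  then show ?case using Node.IH by simp
qed

lemma Lm_empty: "leaves T \<inter> Y = {} \<Longrightarrow> z < \<kappa> \<Longrightarrow> Lm \<kappa> h Y T z s = 1"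
proof (induction T arbitrary: z)
  case (Leaf x) then show ?case by auto
next
  case (Node l r)
  have "\<And>y. y < \<kappa> \<Longrightarrow> Lm \<kappa> h Y l y s = 1" "\<And>y. y < \<kappa> \<Longrightarrow> Lm \<kappa> h Y r y s = 1"
    using Node.IH Node.prems by auto
  then have "(\<Sum>y<\<kappa>. Em \<kappa> (h (Node l r) - h l) z y * Lm \<kappa> h Y l y s) = (\<Sum>y<\<kappa>. Em \<kappa> (h (Node l r) - h l) z y)"
       "(\<Sum>y<\<kappa>. Em \<kappa> (h (Node l r) - h r) z y * Lm \<kappa> h Y r y s) = (\<Sum>y<\<kappa>. Em \<kappa> (h (Node l r) - h r) z y)"
    by (auto intro!: sum.cong)
  then show ?case using Em_rowsum[OF Node.prems(2)] by simp
qed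

lemma Lm_sum1:
  assumes "well_labelled T" "d \<in> leaves T" "d \<notin> Y" "z < \<kappa>"
  shows "(\<Sum>k<\<kappa>. Lm \<kappa> h (insert d Y) T z (s(d:=k))) = Lm \<kappa> h Y T z s"
  using assms
proof (induction T arbitrary: z)
  case (Leaf x)
  then have "x = d" by simp
  then show ?case using Leaf.prems by simp
next
  case (Node l r)
  have wl: "well_labelled l" "well_labelled r" "leaves l \<inter> leaves r = {}" using wl_Node[OF Node.prems(1)] by auto
  let ?Y = "insert d Y"
  let ?el = "\<lambda>y. Em \<kappa> (h (Node l r) - h l) z y"
  let ?er = "\<lambda>y. Em \<kappa> (h (Node l r) - h r) z y"
  show ?case
  proof (cases "d \<in> leaves l")
    case True
    then have dr: "d \<notin> leaves r" using wl by auto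
    have R: "\<And>k y. Lm \<kappa> h ?Y r y (s(d:=k)) = Lm \<kappa> h Y r y s"
    proof -
      fix k y
      have "Lm \<kappa> h ?Y r y (s(d:=k)) = Lm \<kappa> h Y r y (s(d:=k))" by (rule Lm_Ycong) (use dr in auto)
      also have "\<dots> = Lm \<kappa> h Y r y s" by (rule Lm_cong) (use dr in auto)
      finally show "Lm \<kappa> h ?Y r y (s(d:=k)) = Lm \<kappa> h Y r y s" .
    qed
    define Rv where "Rv = (\<Sum>y<\<kappa>. ?er y * Lm \<kappa> h Y r y s)"
    have "(\<Sum>k<\<kappa>. Lm \<kappa> h ?Y (Node l r) z (s(d:=k)))
        = (\<Sum>k<\<kappa>. (\<Sum>y<\<kappa>. ?el y * Lm \<kappa> h ?Y l y (s(d:=k))) * Rv)"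
      by (simp add: R Rv_def)
    also have "\<dots> = (\<Sum>k<\<kappa>. \<Sum>y<\<kappa>. ?el y * Lm \<kappa> h ?Y l y (s(d:=k))) * Rv"
      by (simp add: sum_distrib_right)
    also have "(\<Sum>k<\<kappa>. \<Sum>y<\<kappa>. ?el y * Lm \<kappa> h ?Y l y (s(d:=k))) = (\<Sum>y<\<kappa>. ?el y * (\<Sum>k<\<kappa>. Lm \<kappa> h ?Y l y (s(d:=k))))"
      by (subst sum.swap) (simp add: sum_distrib_left)
    also have "\<dots> = (\<Sum>y<\<kappa>. ?el y * Lm \<kappa> h Y l y s)"
    proof (rule sum.cong[OF refl])
      fix y assume "y \<in> {..<\<kappa>}"
      then have "(\<Sum>k<\<kappa>. Lm \<kappa> h ?Y l y (s(d:=k))) = Lm \<kappa> h Y l y s"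
        using Node.IH(1)[OF wl(1) True Node.prems(3)] by blast
      then show "?el y * (\<Sum>k<\<kappa>. Lm \<kappa> h ?Y l y (s(d:=k))) = ?el y * Lm \<kappa> h Y l y s" by (rule arg_cong)
    qed
    finally show ?thesis by (simp add: Rv_def)
  next
    case False
    then have dr: "d \<in> leaves r" using Node.prems(2) by simp
    have R: "\<And>k y. Lm \<kappa> h ?Y l y (s(d:=k)) = Lm \<kappa> h Y l y s"
    proof -
      fix k y
      have "Lm \<kappa> h ?Y l y (s(d:=k)) = Lm \<kappa> h Y l y (s(d:=k))" by (rule Lm_Ycong) (use False in auto)
      also have "\<dots> = Lm \<kappa> h Y l y s" by (rule Lm_cong) (use False in auto)
      finally show "Lm \<kappa> h ?Y l y (s(d:=k)) = Lm \<kappa> h Y l y s" .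
    qed
    define Lv where "Lv = (\<Sum>y<\<kappa>. ?el y * Lm \<kappa> h Y l y s)"
    have "(\<Sum>k<\<kappa>. Lm \<kappa> h ?Y (Node l r) z (s(d:=k)))
        = (\<Sum>k<\<kappa>. Lv * (\<Sum>y<\<kappa>. ?er y * Lm \<kappa> h ?Y r y (s(d:=k))))"
      by (simp add: R Lv_def)
    also have "\<dots> = Lv * (\<Sum>k<\<kappa>. \<Sum>y<\<kappa>. ?er y * Lm \<kappa> h ?Y r y (s(d:=k)))"
      by (simp add: sum_distrib_left)
    also have "(\<Sum>k<\<kappa>. \<Sum>y<\<kappa>. ?er y * Lm \<kappa> h ?Y r y (s(d:=k))) = (\<Sum>y<\<kappa>. ?er y * (\<Sum>k<\<kappa>. Lm \<kappa> h ?Y r y (s(d:=k))))"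
      by (subst sum.swap) (simp add: sum_distrib_left)
    also have "\<dots> = (\<Sum>y<\<kappa>. ?er y * Lm \<kappa> h Y r y s)"
    proof (rule sum.cong[OF refl])
      fix y assume "y \<in> {..<\<kappa>}"
      then have "(\<Sum>k<\<kappa>. Lm \<kappa> h ?Y r y (s(d:=k))) = Lm \<kappa> h Y r y s"
        using Node.IH(2)[OF wl(2) dr Node.prems(3)] by blast
      then show "?er y * (\<Sum>k<\<kappa>. Lm \<kappa> h ?Y r y (s(d:=k))) = ?er y * Lm \<kappa> h Y r y s" by (rule arg_cong)
    qed
    finally show ?thesis by (simp add: Lv_def)
  qed
qed


lemma marg_set_split:
  assumes "d \<in> X" "d \<notin> W" "s \<in> assignments W \<kappa>"
  shows "{t \<in> assignments X \<kappa>. restrict t W = s} =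
         (\<Union>k\<in>{..<\<kappa>}. {t \<in> assignments X \<kappa>. restrict t (insert d W) = s(d:=k)})"
proof (rule equalityI; rule subsetI)
  fix t assume t: "t \<in> {t \<in> assignments X \<kappa>. restrict t W = s}"
  then have tX: "t \<in> assignments X \<kappa>" and r: "restrict t W = s" by auto
  have "t d < \<kappa>" using tX assms(1) by (auto simp: assignments_def PiE_def Pi_def)
  moreover have "restrict t (insert d W) = s(d := t d)"
  proof
    fix x show "restrict t (insert d W) x = (s(d := t d)) x"
      using r[THEN fun_cong, of x] by (auto simp: restrict_def)
  qed
  ultimately show "t \<in> (\<Union>k\<in>{..<\<kappa>}. {t \<in> assignments X \<kappa>. restrict t (insert d W) = s(d:=k)})"
    using tX by auto
next
  fix t assume "t \<in> (\<Union>k\<in>{..<\<kappa>}. {t \<in> assignments X \<kappa>. restrict t (insert d W) = s(d:=k)})"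
  then obtain k where tX: "t \<in> assignments X \<kappa>" and r: "restrict t (insert d W) = s(d:=k)" by auto
  have ext: "\<And>x. x \<notin> W \<Longrightarrow> s x = undefined" using assms(3) by (auto simp: assignments_def PiE_def extensional_def)
  have "restrict t W = s"
  proof
    fix x show "restrict t W x = s x"
    proof (cases "x \<in> W")
      case True
      then have "x \<noteq> d" using assms(2) by auto
      then show ?thesis using r[THEN fun_cong, of x] True by (auto simp: restrict_def)
    next
      case False then show ?thesis using ext by (simp add: restrict_def)
    qed
  qed
  then show "t \<in> {t \<in> assignments X \<kappa>. restrict t W = s}" using tX by auto
qed

lemma finite_assignments[simp]: "finite X \<Longrightarrow> finite (assignments X \<kappa>)"
  by (simp add: assignments_def finite_PiE)

lemma Lmarg_aux:
  assumes "finite D" "well_labelled T" "0 < \<kappa>" "z < \<kappa>"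
  shows "\<forall>W s. W \<subseteq> leaves T \<longrightarrow> leaves T - W = D \<longrightarrow> s \<in> assignments W \<kappa> \<longrightarrow>
     (\<Sum>t\<in>{t \<in> assignments (leaves T) \<kappa>. restrict t W = s}. Lm \<kappa> h (leaves T) T z t) = Lm \<kappa> h W T z s"
  using assms(1)
proof (induction D rule: finite_induct)
  case empty
  show ?case
  proof (intro allI impI)
    fix W s assume a: "W \<subseteq> leaves T" "leaves T - W = {}" "s \<in> assignments W \<kappa>"
    then have W: "W = leaves T" by auto
    have "{t \<in> assignments (leaves T) \<kappa>. restrict t W = s} = {s}"
      using a(3) unfolding W assignments_def by (auto simp: PiE_restrict)
    then show "(\<Sum>t\<in>{t \<in> assignments (leaves T) \<kappa>. restrict t W = s}. Lm \<kappa> h (leaves T) T z t) = Lm \<kappa> h W T z s"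
      using W by simp
  qed
next
  case (insert d D)
  show ?case
  proof (intro allI impI)
    fix W s assume a: "W \<subseteq> leaves T" "leaves T - W = insert d D" "s \<in> assignments W \<kappa>"
    let ?X = "leaves T"
    have dX: "d \<in> ?X" "d \<notin> W" using a(2) by auto
    let ?W' = "insert d W"
    have W': "?W' \<subseteq> ?X" "?X - ?W' = D" using a(1,2) dX insert.hyps(2) by auto
    have sk: "\<And>k. k < \<kappa> \<Longrightarrow> s(d:=k) \<in> assignments ?W' \<kappa>"
      using a(3) by (auto simp: assignments_def PiE_def extensional_def Pi_def)
    let ?A = "\<lambda>k. {t \<in> assignments ?X \<kappa>. restrict t ?W' = s(d:=k)}"
    have disj: "\<forall>i\<in>{..<\<kappa>}. \<forall>j\<in>{..<\<kappa>}. i \<noteq> j \<longrightarrow> ?A i \<inter> ?A j = {}"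
    proof (intro ballI impI)
      fix i j :: nat assume "i \<noteq> j"
      show "?A i \<inter> ?A j = {}"
      proof (rule ccontr)
        assume "?A i \<inter> ?A j \<noteq> {}"
        then obtain t where "restrict t ?W' = s(d:=i)" "restrict t ?W' = s(d:=j)" by blast
        then have "(s(d:=i)) d = (s(d:=j)) d" by simp
        then show False using \<open>i \<noteq> j\<close> by simp
      qed
    qed
    have "(\<Sum>t\<in>{t \<in> assignments ?X \<kappa>. restrict t W = s}. Lm \<kappa> h ?X T z t)
        = (\<Sum>t\<in>(\<Union>k\<in>{..<\<kappa>}. ?A k). Lm \<kappa> h ?X T z t)"
      using marg_set_split[OF dX a(3)] by simp
    also have "\<dots> = (\<Sum>k<\<kappa>. \<Sum>t\<in>?A k. Lm \<kappa> h ?X T z t)"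
      by (rule sum.UNION_disjoint) (use disj in auto)
    also have "\<dots> = (\<Sum>k<\<kappa>. Lm \<kappa> h ?W' T z (s(d:=k)))"
    proof (rule sum.cong[OF refl])
      fix k assume "k \<in> {..<\<kappa>}"
      then show "(\<Sum>t\<in>?A k. Lm \<kappa> h ?X T z t) = Lm \<kappa> h ?W' T z (s(d:=k))"
        using insert.IH W' sk by blast
    qed
    also have "\<dots> = Lm \<kappa> h W T z s"
      by (rule Lm_sum1) (use assms dX in auto)
    finally show "(\<Sum>t\<in>{t \<in> assignments ?X \<kappa>. restrict t W = s}. Lm \<kappa> h ?X T z t) = Lm \<kappa> h W T z s" .
  qed
qed

lemma Lmarg:
  assumes "well_labelled T" "0 < \<kappa>" "z < \<kappa>" "W \<subseteq> leaves T" "s \<in> assignments W \<kappa>"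
  shows "(\<Sum>t\<in>{t \<in> assignments (leaves T) \<kappa>. restrict t W = s}. Lm \<kappa> h (leaves T) T z t) = Lm \<kappa> h W T z s"
  using Lmarg_aux[of "leaves T - W" T \<kappa> z h] assms by auto

definition Pw :: "nat \<Rightarrow> ('a rtree \<Rightarrow> nat) \<Rightarrow> 'a rtree \<Rightarrow> ('a \<Rightarrow> nat) \<Rightarrow> real" where
  "Pw \<kappa> h T s = (if s \<in> assignments (leaves T) \<kappa> then (\<Sum>z<\<kappa>. Lm \<kappa> h (leaves T) T z s) / real \<kappa> else 0)"

lemma marg_Pw:
  assumes "well_labelled T" "0 < \<kappa>" "W \<subseteq> leaves T" "s \<in> assignments W \<kappa>"
  shows "marg (leaves T) \<kappa> (Pw \<kappa> h T) W s = (\<Sum>z<\<kappa>. Lm \<kappa> h W T z s) / real \<kappa>"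
proof -
  let ?S = "{t \<in> assignments (leaves T) \<kappa>. restrict t W = s}"
  have "marg (leaves T) \<kappa> (Pw \<kappa> h T) W s = (\<Sum>t\<in>?S. Pw \<kappa> h T t)"
    using assms(4) by (simp add: marg_def)
  also have "\<dots> = (\<Sum>t\<in>?S. (\<Sum>z<\<kappa>. Lm \<kappa> h (leaves T) T z t) / real \<kappa>)"
    by (rule sum.cong) (auto simp: Pw_def)
  also have "\<dots> = (\<Sum>z<\<kappa>. \<Sum>t\<in>?S. Lm \<kappa> h (leaves T) T z t) / real \<kappa>"
    by (subst sum.swap) (simp add: sum_divide_distrib)
  also have "\<dots> = (\<Sum>z<\<kappa>. Lm \<kappa> h W T z s) / real \<kappa>"
    using Lmarg[OF assms(1,2) _ assms(3,4)] by simp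
  finally show ?thesis .
qed

lemma Pw_prob:
  assumes "well_labelled T" "0 < \<kappa>"
  shows "is_prob_tensor \<kappa> (leaves T) (Pw \<kappa> h T)"
proof -
  have nn: "\<forall>s \<in> assignments (leaves T) \<kappa>. Pw \<kappa> h T s \<ge> 0"
    by (auto simp: Pw_def intro!: divide_nonneg_nonneg sum_nonneg Lm_nonneg)
  have z: "\<forall>s. s \<notin> assignments (leaves T) \<kappa> \<longrightarrow> Pw \<kappa> h T s = 0" by (simp add: Pw_def)
  let ?s0 = "(\<lambda>_. undefined) :: 'a \<Rightarrow> nat"
  have s0: "?s0 \<in> assignments {} \<kappa>" by (simp add: assignments_def)
  have S: "{t \<in> assignments (leaves T) \<kappa>. restrict t {} = ?s0} = assignments (leaves T) \<kappa>"
    by (auto simp: restrict_def)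
  have "marg (leaves T) \<kappa> (Pw \<kappa> h T) {} ?s0 = (\<Sum>z<\<kappa>. Lm \<kappa> h {} T z ?s0) / real \<kappa>"
    by (rule marg_Pw) (use assms s0 in auto)
  also have "\<dots> = 1" using assms(2) by (simp add: Lm_empty)
  finally have "(\<Sum>s \<in> assignments (leaves T) \<kappa>. Pw \<kappa> h T s) = 1"
    using s0 S by (simp add: marg_def)
  then show ?thesis using nn z by (simp add: is_prob_tensor_def)
qed


fun htV :: "'a set \<Rightarrow> 'a rtree \<Rightarrow> nat" where
  "htV V (Leaf x) = 0"
| "htV V (Node l r) = (if leaves (Node l r) \<subseteq> V then 0 else 1)"

lemma htV_le1: "htV V T \<le> 1" by (cases T) auto

lemma htV_mono: "htV V l \<le> htV V (Node l r)" "htV V r \<le> htV V (Node l r)"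
  by (cases l; auto) (cases r; auto)

lemma Em_CK:
  assumes "a = 0 \<or> b = 0" "z < \<kappa>" "u < \<kappa>"
  shows "(\<Sum>y<\<kappa>. Em \<kappa> a z y * Em \<kappa> b y u) = Em \<kappa> (a + b) z u"
proof (cases "a = 0")
  case True
  have "(\<Sum>y<\<kappa>. Em \<kappa> a z y * Em \<kappa> b y u) = (\<Sum>y<\<kappa>. if z = y then Em \<kappa> b y u else 0)"
    by (rule sum.cong) (auto simp: Em_def True)
  also have "\<dots> = Em \<kappa> b z u" using assms(2) by (simp add: sum.delta)
  finally show ?thesis using True by simp
next
  case False
  then have b: "b = 0" using assms(1) by simp
  have "(\<Sum>y<\<kappa>. Em \<kappa> a z y * Em \<kappa> b y u) = (\<Sum>y<\<kappa>. if y = u then Em \<kappa> a z y else 0)"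
    by (rule sum.cong) (auto simp: Em_def b)
  also have "\<dots> = Em \<kappa> a z u" using assms(3) by (simp add: sum.delta')
  finally show ?thesis using b by simp
qed

lemma single_leaf: "{w} \<inter> Y = {x} \<Longrightarrow> w = x \<and> x \<in> Y"
  by (metis Int_iff insertI1 singletonD)
lemma single_split: "(A \<union> B) \<inter> Y = {x} \<Longrightarrow> A \<inter> B = {} \<Longrightarrow> x \<in> A \<Longrightarrow> A \<inter> Y = {x} \<and> B \<inter> Y = {}"
  by (simp add: set_eq_iff) (metis disjoint_iff)

lemma Lm_single:
  assumes "leaves T \<inter> Y = {x}" "z < \<kappa>" "s x < \<kappa>" "well_labelled T"
  shows "Lm \<kappa> (htV V) Y T z s = Em \<kappa> (htV V T) z (s x)"
  using assms
proof (induction T arbitrary: z)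
  case (Leaf w)
  have "{w} \<inter> Y = {x}" using Leaf.prems(1) by (simp only: leaves_Leaf)
  then have wx: "w = x \<and> x \<in> Y" by (rule single_leaf)
  then show ?case by (simp add: Em_def)
next
  case (Node l r)
  let ?h = "htV V"
  have hm: "?h l \<le> ?h (Node l r)" "?h r \<le> ?h (Node l r)" "?h (Node l r) \<le> 1" by (rule htV_mono htV_le1)+
  have wl: "well_labelled l" "well_labelled r" "leaves l \<inter> leaves r = {}" using wl_Node[OF Node.prems(4)] by auto
  have pr: "(leaves l \<union> leaves r) \<inter> Y = {x}" using Node.prems(1) by (simp only: leaves_Node)
  show ?case
  proof (cases "x \<in> leaves l")
    case True
    have l: "leaves l \<inter> Y = {x}" "leaves r \<inter> Y = {}" using single_split[OF pr wl(3) True] by auto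
    have R: "(\<Sum>y<\<kappa>. Em \<kappa> (?h (Node l r) - ?h r) z y * Lm \<kappa> ?h Y r y s) = 1"
      using Lm_empty[OF l(2)] Em_rowsum[OF Node.prems(2)] by simp
    have "(\<Sum>y<\<kappa>. Em \<kappa> (?h (Node l r) - ?h l) z y * Lm \<kappa> ?h Y l y s)
        = (\<Sum>y<\<kappa>. Em \<kappa> (?h (Node l r) - ?h l) z y * Em \<kappa> (?h l) y (s x))"
      by (rule sum.cong) (use Node.IH(1) l(1) Node.prems(3) wl in auto)
    also have "\<dots> = Em \<kappa> (?h (Node l r) - ?h l + ?h l) z (s x)"
      by (rule Em_CK) (use hm Node.prems in auto)
    also have "?h (Node l r) - ?h l + ?h l = ?h (Node l r)" using hm by simp
    finally show ?thesis using R by simp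
  next
    case False
    have xr: "x \<in> leaves r" using pr False by auto
    have pr': "(leaves r \<union> leaves l) \<inter> Y = {x}" using pr by (simp add: Un_commute)
    have l: "leaves r \<inter> Y = {x}" "leaves l \<inter> Y = {}" using single_split[OF pr' _ xr] wl(3) by (auto simp: Int_commute)
    have R: "(\<Sum>y<\<kappa>. Em \<kappa> (?h (Node l r) - ?h l) z y * Lm \<kappa> ?h Y l y s) = 1"
      using Lm_empty[OF l(2)] Em_rowsum[OF Node.prems(2)] by simp
    have "(\<Sum>y<\<kappa>. Em \<kappa> (?h (Node l r) - ?h r) z y * Lm \<kappa> ?h Y r y s)
        = (\<Sum>y<\<kappa>. Em \<kappa> (?h (Node l r) - ?h r) z y * Em \<kappa> (?h r) y (s x))"
      by (rule sum.cong) (use Node.IH(2) l(1) Node.prems(3) wl in auto)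
    also have "\<dots> = Em \<kappa> (?h (Node l r) - ?h r + ?h r) z (s x)"
      by (rule Em_CK) (use hm Node.prems in auto)
    also have "?h (Node l r) - ?h r + ?h r = ?h (Node l r)" using hm by simp
    finally show ?thesis using R by simp
  qed
qed

lemma Lm_cherry:
  assumes "leaves l \<inter> Y = {x}" "leaves r \<inter> Y = {y}" "z < \<kappa>" "s x < \<kappa>" "s y < \<kappa>" "well_labelled (Node l r)"
  shows "Lm \<kappa> (htV V) Y (Node l r) z s = Em \<kappa> (htV V (Node l r)) z (s x) * Em \<kappa> (htV V (Node l r)) z (s y)"
proof -
  let ?h = "htV V"
  have wl: "well_labelled l" "well_labelled r" using wl_Node[OF assms(6)] by auto
  have hm: "?h l \<le> ?h (Node l r)" "?h r \<le> ?h (Node l r)" "?h (Node l r) \<le> 1" by (rule htV_mono htV_le1)+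
  have Ls: "\<And>w. w < \<kappa> \<Longrightarrow> Lm \<kappa> ?h Y l w s = Em \<kappa> (?h l) w (s x)"
  proof -
    fix w assume w: "w < \<kappa>"
    show "Lm \<kappa> ?h Y l w s = Em \<kappa> (?h l) w (s x)" by (rule Lm_single[where s=s and x=x, OF assms(1) w assms(4) wl(1)])
  qed
  have Rs: "\<And>w. w < \<kappa> \<Longrightarrow> Lm \<kappa> ?h Y r w s = Em \<kappa> (?h r) w (s y)"
  proof -
    fix w assume w: "w < \<kappa>"
    show "Lm \<kappa> ?h Y r w s = Em \<kappa> (?h r) w (s y)" by (rule Lm_single[where s=s and x=y, OF assms(2) w assms(5) wl(2)])
  qed
  have "(\<Sum>w<\<kappa>. Em \<kappa> (?h (Node l r) - ?h l) z w * Lm \<kappa> ?h Y l w s)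
        = (\<Sum>w<\<kappa>. Em \<kappa> (?h (Node l r) - ?h l) z w * Em \<kappa> (?h l) w (s x))"
    by (rule sum.cong) (simp_all add: Ls)
  also have "\<dots> = Em \<kappa> (?h (Node l r) - ?h l + ?h l) z (s x)"
    by (rule Em_CK) (use hm assms(3,4) in auto)
  also have "?h (Node l r) - ?h l + ?h l = ?h (Node l r)" using hm by simp
  finally have L: "(\<Sum>w<\<kappa>. Em \<kappa> (?h (Node l r) - ?h l) z w * Lm \<kappa> ?h Y l w s) = Em \<kappa> (?h (Node l r)) z (s x)" .
  have "(\<Sum>w<\<kappa>. Em \<kappa> (?h (Node l r) - ?h r) z w * Lm \<kappa> ?h Y r w s)
        = (\<Sum>w<\<kappa>. Em \<kappa> (?h (Node l r) - ?h r) z w * Em \<kappa> (?h r) w (s y))"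
    by (rule sum.cong) (simp_all add: Rs)
  also have "\<dots> = Em \<kappa> (?h (Node l r) - ?h r + ?h r) z (s y)"
    by (rule Em_CK) (use hm assms(3,5) in auto)
  also have "?h (Node l r) - ?h r + ?h r = ?h (Node l r)" using hm by simp
  finally have R: "(\<Sum>w<\<kappa>. Em \<kappa> (?h (Node l r) - ?h r) z w * Lm \<kappa> ?h Y r w s) = Em \<kappa> (?h (Node l r)) z (s y)" .
  show ?thesis using L R by simp
qed

lemma wl_subtree: "S \<in> subtrees T \<Longrightarrow> well_labelled T \<Longrightarrow> well_labelled S"
proof (induction T)
  case (Leaf x) then show ?case by simp
next
  case (Node l r)
  then show ?case using wl_Node[OF Node.prems(2)] by auto
qed

lemma mem_single: "A \<inter> Y = {p} \<Longrightarrow> p \<in> A \<and> p \<in> Y"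
  by (metis Int_iff insertI1)

lemma subtrees_trans: "S \<in> subtrees T \<Longrightarrow> subtrees S \<subseteq> subtrees T"
  by (induction T) auto

lemma Lm_lift:
  assumes "S \<in> subtrees T" "well_labelled T"
    and "\<And>z. z < \<kappa> \<Longrightarrow> Lm \<kappa> h Y S z s' = Lm \<kappa> h Y S z s"
    and "\<And>w. w \<notin> leaves S \<Longrightarrow> s' w = s w"
  shows "z < \<kappa> \<Longrightarrow> Lm \<kappa> h Y T z s' = Lm \<kappa> h Y T z s"
  using assms(1,2)
proof (induction T arbitrary: z)
  case (Leaf x)
  then have "S = Leaf x" by simp
  then show ?case using assms(3) Leaf by simp
next
  case (Node l r)
  have wl: "well_labelled l" "well_labelled r" "leaves l \<inter> leaves r = {}" using wl_Node[OF Node.prems(3)] by auto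
  show ?case
  proof (cases "S = Node l r")
    case True then show ?thesis using assms(3) Node.prems by simp
  next
    case False
    then have "S \<in> subtrees l \<or> S \<in> subtrees r" using Node.prems(2) by simp
    then show ?thesis
    proof
      assume S: "S \<in> subtrees l"
      have "leaves S \<subseteq> leaves l" using subtrees_leaves[OF S] .
      then have "\<And>y. Lm \<kappa> h Y r y s' = Lm \<kappa> h Y r y s"
        by (intro Lm_cong) (use assms(4) wl(3) in auto)
      moreover have "\<And>y. y < \<kappa> \<Longrightarrow> Lm \<kappa> h Y l y s' = Lm \<kappa> h Y l y s" using Node.IH(1)[OF _ S wl(1)] by blast
      ultimately show ?thesis by simp
    next
      assume S: "S \<in> subtrees r"
      have "leaves S \<subseteq> leaves r" using subtrees_leaves[OF S] .
      then have "\<And>y. Lm \<kappa> h Y l y s' = Lm \<kappa> h Y l y s"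
        by (intro Lm_cong) (use assms(4) wl(3) in auto)
      moreover have "\<And>y. y < \<kappa> \<Longrightarrow> Lm \<kappa> h Y r y s' = Lm \<kappa> h Y r y s" using Node.IH(2)[OF _ S wl(2)] by blast
      ultimately show ?thesis by simp
    qed
  qed
qed

lemma swap_idx_comm: "x \<noteq> y \<Longrightarrow> swap_idx s x y = swap_idx s y x"
  by (auto simp: swap_idx_def fun_eq_iff)

lemma Pw_UE:
  assumes "well_labelled T" "0 < \<kappa>"
  shows "Pw \<kappa> (htV V) T \<in> UE \<kappa> T"
proof -
  let ?h = "htV V"
  have "\<forall>Y T'. Y \<subseteq> leaves T \<longrightarrow> induced T Y = Some T' \<longrightarrow>
        (\<forall>x y. {x, y} \<in> two_clades T' \<longrightarrow>
           (\<forall>s \<in> assignments Y \<kappa>.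
              marg (leaves T) \<kappa> (Pw \<kappa> ?h T) Y (swap_idx s x y) = marg (leaves T) \<kappa> (Pw \<kappa> ?h T) Y s))"
  proof (intro allI impI ballI)
    fix Y T' x y s
    assume Y: "Y \<subseteq> leaves T" and ind: "induced T Y = Some T'" and tc: "{x, y} \<in> two_clades T'"
      and s: "s \<in> assignments Y \<kappa>"
    have xy: "x \<noteq> y" using tc by (auto simp: two_clades_def)
    have cl: "{x,y} \<in> clusters T'" using tc by (simp add: two_clades_def)
    obtain S where S: "S \<in> subtrees T" "leaves S \<inter> Y = {x,y}" using clusters_induced[OF ind cl] by metis
    have "x \<in> leaves S \<inter> Y" "y \<in> leaves S \<inter> Y" unfolding S(2) by simp_all
    then have xyY: "x \<in> Y" "y \<in> Y" by simp_all
    have sx: "s x < \<kappa>" "s y < \<kappa>" using s xyY by (auto simp: assignments_def PiE_def Pi_def)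
    have sw: "swap_idx s x y \<in> assignments Y \<kappa>"
      using s xyY by (auto simp: assignments_def swap_idx_def PiE_def Pi_def extensional_def)
    obtain l r where lr: "Node l r \<in> subtrees S"
      "(leaves l \<inter> Y = {x} \<and> leaves r \<inter> Y = {y}) \<or> (leaves l \<inter> Y = {y} \<and> leaves r \<inter> Y = {x})"
      using cherry_node[OF S(2) xy] by metis
    have lrT: "Node l r \<in> subtrees T" using subtrees_trans[OF S(1)] lr(1) by (rule subsetD)
    have wlr: "well_labelled (Node l r)" by (rule wl_subtree[OF lrT assms(1)])
    have lvs: "x \<in> leaves (Node l r) \<and> y \<in> leaves (Node l r)"
      using lr(2)
    proof
      assume c: "leaves l \<inter> Y = {x} \<and> leaves r \<inter> Y = {y}"
      then show ?thesis using mem_single[of "leaves l" Y x] mem_single[of "leaves r" Y y] by simp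
    next
      assume c: "leaves l \<inter> Y = {y} \<and> leaves r \<inter> Y = {x}"
      then show ?thesis using mem_single[of "leaves l" Y y] mem_single[of "leaves r" Y x] by simp
    qed
    let ?s' = "swap_idx s x y"
    have s'v: "?s' x = s y" "?s' y = s x" using xy by (auto simp: swap_idx_def)
    have loc: "\<And>z. z < \<kappa> \<Longrightarrow> Lm \<kappa> ?h Y (Node l r) z ?s' = Lm \<kappa> ?h Y (Node l r) z s"
    proof -
      fix z assume z: "z < \<kappa>"
      have sx': "?s' x < \<kappa>" "?s' y < \<kappa>" using sx s'v by simp_all
      from lr(2) show "Lm \<kappa> ?h Y (Node l r) z ?s' = Lm \<kappa> ?h Y (Node l r) z s"
      proof
        assume c: "leaves l \<inter> Y = {x} \<and> leaves r \<inter> Y = {y}"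
        have e1: "Lm \<kappa> ?h Y (Node l r) z ?s' = Em \<kappa> (?h (Node l r)) z (?s' x) * Em \<kappa> (?h (Node l r)) z (?s' y)"
          by (rule Lm_cherry[where s="?s'" and x=x and y=y, OF conjunct1[OF c] conjunct2[OF c] z sx' wlr])
        have e2: "Lm \<kappa> ?h Y (Node l r) z s = Em \<kappa> (?h (Node l r)) z (s x) * Em \<kappa> (?h (Node l r)) z (s y)"
          by (rule Lm_cherry[where s=s and x=x and y=y, OF conjunct1[OF c] conjunct2[OF c] z sx wlr])
        show ?thesis unfolding e1 e2 s'v by simp
      next
        assume c: "leaves l \<inter> Y = {y} \<and> leaves r \<inter> Y = {x}"
        have e1: "Lm \<kappa> ?h Y (Node l r) z ?s' = Em \<kappa> (?h (Node l r)) z (?s' y) * Em \<kappa> (?h (Node l r)) z (?s' x)"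
          by (rule Lm_cherry[where s="?s'" and x=y and y=x, OF conjunct1[OF c] conjunct2[OF c] z sx'(2) sx'(1) wlr])
        have e2: "Lm \<kappa> ?h Y (Node l r) z s = Em \<kappa> (?h (Node l r)) z (s y) * Em \<kappa> (?h (Node l r)) z (s x)"
          by (rule Lm_cherry[where s=s and x=y and y=x, OF conjunct1[OF c] conjunct2[OF c] z sx(2) sx(1) wlr])
        show ?thesis unfolding e1 e2 s'v by simp
      qed
    qed
    have out: "\<And>w. w \<notin> leaves (Node l r) \<Longrightarrow> ?s' w = s w"
      using lvs by (auto simp: swap_idx_def)
    have all: "\<And>z. z < \<kappa> \<Longrightarrow> Lm \<kappa> ?h Y T z ?s' = Lm \<kappa> ?h Y T z s"
      by (rule Lm_lift[OF lrT assms(1) loc out])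
    show "marg (leaves T) \<kappa> (Pw \<kappa> ?h T) Y ?s' = marg (leaves T) \<kappa> (Pw \<kappa> ?h T) Y s"
      using marg_Pw[OF assms Y sw] marg_Pw[OF assms Y s] all by simp
  qed
  then show ?thesis using Pw_prob[OF assms] by (simp add: UE_def)
qed


lemma htV_Node_sub0: "leaves S \<subseteq> V \<Longrightarrow> htV V S = 0" by (cases S) auto

lemma Lm_inside:
  assumes "leaves S \<subseteq> V" "well_labelled S" "y < \<kappa>"
  shows "Lm \<kappa> (htV V) Y S y s = (\<Prod>x\<in>Y \<inter> leaves S. if y = s x then 1 else 0)"
  using assms
proof (induction S arbitrary: y)
  case (Leaf x)
  show ?case
  proof (cases "x \<in> Y")
    case True
    then have "Y \<inter> leaves (Leaf x) = {x}" by auto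
    then show ?thesis using True by simp
  next
    case False
    then have "Y \<inter> leaves (Leaf x) = {}" by auto
    then show ?thesis using False by simp
  qed
next
  case (Node l r)
  have wl: "well_labelled l" "well_labelled r" "leaves l \<inter> leaves r = {}" using wl_Node[OF Node.prems(2)] by auto
  have sub: "leaves l \<subseteq> V" "leaves r \<subseteq> V" using Node.prems(1) by auto
  have h0: "htV V (Node l r) = 0" "htV V l = 0" "htV V r = 0"
    using htV_Node_sub0[OF Node.prems(1)] htV_Node_sub0[OF sub(1)] htV_Node_sub0[OF sub(2)] by auto
  have e: "\<And>T. (\<Sum>w<\<kappa>. Em \<kappa> 0 y w * Lm \<kappa> (htV V) Y T w s) = Lm \<kappa> (htV V) Y T y s"
  proof -
    fix T
    have "(\<Sum>w<\<kappa>. Em \<kappa> 0 y w * Lm \<kappa> (htV V) Y T w s) = (\<Sum>w<\<kappa>. if y = w then Lm \<kappa> (htV V) Y T w s else 0)"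
      by (rule sum.cong) (auto simp: Em_def)
    also have "\<dots> = Lm \<kappa> (htV V) Y T y s" using Node.prems(3) by (simp add: sum.delta)
    finally show "(\<Sum>w<\<kappa>. Em \<kappa> 0 y w * Lm \<kappa> (htV V) Y T w s) = Lm \<kappa> (htV V) Y T y s" .
  qed
  have "Lm \<kappa> (htV V) Y (Node l r) y s = Lm \<kappa> (htV V) Y l y s * Lm \<kappa> (htV V) Y r y s"
    using e h0 by simp
  also have "\<dots> = (\<Prod>x\<in>Y \<inter> leaves l. if y = s x then 1 else 0) * (\<Prod>x\<in>Y \<inter> leaves r. if y = s x then 1 else 0)"
    using Node.IH(1)[OF sub(1) wl(1) Node.prems(3)] Node.IH(2)[OF sub(2) wl(2) Node.prems(3)] by simp
  also have "\<dots> = (\<Prod>x\<in>(Y \<inter> leaves l) \<union> (Y \<inter> leaves r). if y = s x then 1 else 0)"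
    by (rule prod.union_disjoint[symmetric]) (use wl(3) in auto)
  also have "(Y \<inter> leaves l) \<union> (Y \<inter> leaves r) = Y \<inter> leaves (Node l r)" by auto
  finally show ?case .
qed

lemma Lm_outside:
  assumes "leaves S \<inter> V = {}" "well_labelled S" "z < \<kappa>" "\<forall>x\<in>Y. s x < \<kappa>"
  shows "(\<Sum>w<\<kappa>. Em \<kappa> (1 - htV V S) z w * Lm \<kappa> (htV V) Y S w s) = (\<Prod>x\<in>Y \<inter> leaves S. Mk \<kappa> z (s x))"
  using assms
proof (induction S arbitrary: z)
  case (Leaf x)
  show ?case
  proof (cases "x \<in> Y")
    case True
    then have Yx: "Y \<inter> leaves (Leaf x) = {x}" by auto
    have "(\<Sum>w<\<kappa>. Em \<kappa> (1 - htV V (Leaf x)) z w * Lm \<kappa> (htV V) Y (Leaf x) w s) = (\<Sum>w<\<kappa>. if w = s x then Mk \<kappa> z w else 0)"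
      by (rule sum.cong) (auto simp: Em_def True)
    also have "\<dots> = Mk \<kappa> z (s x)" using Leaf.prems(4) True by (simp add: sum.delta')
    finally show ?thesis using Yx by simp
  next
    case False
    then have "Y \<inter> leaves (Leaf x) = {}" by auto
    moreover have "(\<Sum>w<\<kappa>. Em \<kappa> (1 - htV V (Leaf x)) z w * Lm \<kappa> (htV V) Y (Leaf x) w s) = 1"
      using Em_rowsum[OF Leaf.prems(3)] False by simp
    ultimately show ?thesis by simp
  qed
next
  case (Node l r)
  have wl: "well_labelled l" "well_labelled r" "leaves l \<inter> leaves r = {}" using wl_Node[OF Node.prems(2)] by auto
  have dj: "leaves l \<inter> V = {}" "leaves r \<inter> V = {}" using Node.prems(1) by auto
  have h1: "htV V (Node l r) = 1"
  proof -
    obtain x where "x \<in> leaves l" using leaves_ne[of l] by auto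
    then have "\<not> leaves (Node l r) \<subseteq> V" using dj(1) by auto
    then show ?thesis by simp
  qed
  have "(\<Sum>w<\<kappa>. Em \<kappa> (1 - htV V (Node l r)) z w * Lm \<kappa> (htV V) Y (Node l r) w s)
      = (\<Sum>w<\<kappa>. if z = w then Lm \<kappa> (htV V) Y (Node l r) w s else 0)"
    by (rule sum.cong) (auto simp: Em_def h1 simp del: Lm.simps htV.simps)
  also have "\<dots> = Lm \<kappa> (htV V) Y (Node l r) z s" using Node.prems(3) by (simp add: sum.delta)
  also have "\<dots> = (\<Prod>x\<in>Y \<inter> leaves l. Mk \<kappa> z (s x)) * (\<Prod>x\<in>Y \<inter> leaves r. Mk \<kappa> z (s x))"
    using Node.IH(1)[OF dj(1) wl(1) Node.prems(3,4)] Node.IH(2)[OF dj(2) wl(2) Node.prems(3,4)] h1 by simp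
  also have "\<dots> = (\<Prod>x\<in>(Y \<inter> leaves l) \<union> (Y \<inter> leaves r). Mk \<kappa> z (s x))"
    by (rule prod.union_disjoint[symmetric]) (use wl(3) in auto)
  also have "(Y \<inter> leaves l) \<union> (Y \<inter> leaves r) = Y \<inter> leaves (Node l r)" by auto
  finally show ?case .
qed

lemma Lm_path:
  assumes "v \<in> subtrees T" "well_labelled T" "leaves v \<inter> Y = {a, b}" "a \<noteq> b" "z < \<kappa>" "\<forall>x\<in>Y. s x < \<kappa>"
  shows "(\<Sum>w<\<kappa>. Em \<kappa> (1 - htV (leaves v) T) z w * Lm \<kappa> (htV (leaves v)) Y T w s)
       = (if s a = s b then Mk \<kappa> z (s a) else 0) * (\<Prod>x\<in>(Y \<inter> leaves T) - {a, b}. Mk \<kappa> z (s x))"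
  using assms(1,2,5)
proof (induction T arbitrary: z)
  case (Leaf x)
  then have "v = Leaf x" by simp
  then have "leaves v \<inter> Y \<subseteq> {x}" by auto
  then have "{a,b} \<subseteq> {x}" using assms(3) by simp
  then show ?case using assms(4) by auto
next
  case (Node l r)
  let ?V = "leaves v"
  have abY: "a \<in> ?V" "b \<in> ?V" "a \<in> Y" "b \<in> Y"
    using mem_single assms(3) by (metis Int_iff insertI1 insertCI)+
  show ?case
  proof (cases "v = Node l r")
    case True
    have wv: "well_labelled v" using Node.prems(2) True by simp
    have h0: "htV ?V (Node l r) = 0" using htV_Node_sub0[of "Node l r" ?V] True by simp
    have inside: "\<And>w. w < \<kappa> \<Longrightarrow> Lm \<kappa> (htV ?V) Y (Node l r) w s = (if w = s a then 1 else 0) * (if w = s b then 1 else 0)"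
    proof -
      fix w assume w: "w < \<kappa>"
      have "Lm \<kappa> (htV ?V) Y (Node l r) w s = (\<Prod>x\<in>Y \<inter> leaves (Node l r). if w = s x then 1 else 0)"
        using Lm_inside[of "Node l r" ?V w \<kappa> Y s] True Node.prems(2) w by simp
      also have "Y \<inter> leaves (Node l r) = {a, b}" using assms(3) True by auto
      finally show "Lm \<kappa> (htV ?V) Y (Node l r) w s = (if w = s a then 1 else 0) * (if w = s b then 1 else 0)"
        using assms(4) by simp
    qed
    have "(\<Sum>w<\<kappa>. Em \<kappa> (1 - htV ?V (Node l r)) z w * Lm \<kappa> (htV ?V) Y (Node l r) w s)
        = (\<Sum>w<\<kappa>. if w = s a then (if s a = s b then Mk \<kappa> z (s a) else 0) else 0)"
      by (rule sum.cong) (auto simp: Em_def h0 inside simp del: Lm.simps htV.simps)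
    also have "\<dots> = (if s a = s b then Mk \<kappa> z (s a) else 0)"
      using assms(6) abY by (simp add: sum.delta')
    finally have X: "(\<Sum>w<\<kappa>. Em \<kappa> (1 - htV ?V (Node l r)) z w * Lm \<kappa> (htV ?V) Y (Node l r) w s) = (if s a = s b then Mk \<kappa> z (s a) else 0)" .
    have E: "(Y \<inter> leaves (Node l r)) - {a, b} = {}" using assms(3) True by auto
    show ?thesis unfolding E prod.empty mult_1_right by (rule X)
  next
    case False
    have wl: "well_labelled l" "well_labelled r" "leaves l \<inter> leaves r = {}" using wl_Node[OF Node.prems(2)] by auto
    have vin: "v \<in> subtrees l \<or> v \<in> subtrees r" using Node.prems(1) False by simp
    have h1: "htV ?V (Node l r) = 1"
    proof -
      have "\<not> (leaves l \<subseteq> ?V \<and> leaves r \<subseteq> ?V)"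
      proof
        assume c: "leaves l \<subseteq> ?V \<and> leaves r \<subseteq> ?V"
        from vin show False
        proof
          assume "v \<in> subtrees l"
          then have "?V \<subseteq> leaves l" by (rule subtrees_leaves)
          obtain x where "x \<in> leaves r" using leaves_ne[of r] by auto
          then show False using c \<open>?V \<subseteq> leaves l\<close> wl(3) by auto
        next
          assume "v \<in> subtrees r"
          then have "?V \<subseteq> leaves r" by (rule subtrees_leaves)
          obtain x where "x \<in> leaves l" using leaves_ne[of l] by auto
          then show False using c \<open>?V \<subseteq> leaves r\<close> wl(3) by auto
        qed
      qed
      then show ?thesis by auto
    qed
    have top: "(\<Sum>w<\<kappa>. Em \<kappa> (1 - htV ?V (Node l r)) z w * Lm \<kappa> (htV ?V) Y (Node l r) w s)
        = Lm \<kappa> (htV ?V) Y (Node l r) z s"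
    proof -
      have "(\<Sum>w<\<kappa>. Em \<kappa> (1 - htV ?V (Node l r)) z w * Lm \<kappa> (htV ?V) Y (Node l r) w s)
        = (\<Sum>w<\<kappa>. if z = w then Lm \<kappa> (htV ?V) Y (Node l r) w s else 0)"
        by (rule sum.cong) (auto simp: Em_def h1 simp del: Lm.simps htV.simps)
      also have "\<dots> = Lm \<kappa> (htV ?V) Y (Node l r) z s" using Node.prems(3) by (simp add: sum.delta)
      finally show ?thesis .
    qed
    let ?I = "if s a = s b then Mk \<kappa> z (s a) else 0"
    from vin show ?thesis
    proof
      assume vl: "v \<in> subtrees l"
      have Vl: "?V \<subseteq> leaves l" by (rule subtrees_leaves[OF vl])
      have djr: "leaves r \<inter> ?V = {}" using Vl wl(3) by auto
      have abr: "a \<notin> leaves r" "b \<notin> leaves r" using abY Vl wl(3) by auto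
      have "Lm \<kappa> (htV ?V) Y (Node l r) z s = ?I * ((\<Prod>x\<in>(Y \<inter> leaves l) - {a, b}. Mk \<kappa> z (s x)) * (\<Prod>x\<in>Y \<inter> leaves r. Mk \<kappa> z (s x)))"
        using Node.IH(1)[OF vl wl(1) Node.prems(3)] Lm_outside[OF djr wl(2) Node.prems(3) assms(6)] h1 by (simp add: mult.assoc)
      also have "(\<Prod>x\<in>(Y \<inter> leaves l) - {a, b}. Mk \<kappa> z (s x)) * (\<Prod>x\<in>Y \<inter> leaves r. Mk \<kappa> z (s x))
          = (\<Prod>x\<in>((Y \<inter> leaves l) - {a, b}) \<union> (Y \<inter> leaves r). Mk \<kappa> z (s x))"
        by (rule prod.union_disjoint[symmetric]) (use wl(3) in auto)
      also have "((Y \<inter> leaves l) - {a, b}) \<union> (Y \<inter> leaves r) = (Y \<inter> leaves (Node l r)) - {a, b}"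
        using abr by auto
      finally show ?thesis using top by simp
    next
      assume vr: "v \<in> subtrees r"
      have Vr: "?V \<subseteq> leaves r" by (rule subtrees_leaves[OF vr])
      have djl: "leaves l \<inter> ?V = {}" using Vr wl(3) by auto
      have abl: "a \<notin> leaves l" "b \<notin> leaves l" using abY Vr wl(3) by auto
      have "Lm \<kappa> (htV ?V) Y (Node l r) z s = (\<Prod>x\<in>Y \<inter> leaves l. Mk \<kappa> z (s x)) * (?I * (\<Prod>x\<in>(Y \<inter> leaves r) - {a, b}. Mk \<kappa> z (s x)))"
        using Node.IH(2)[OF vr wl(2) Node.prems(3)] Lm_outside[OF djl wl(1) Node.prems(3) assms(6)] h1 by simp
      also have "\<dots> = ?I * ((\<Prod>x\<in>Y \<inter> leaves l. Mk \<kappa> z (s x)) * (\<Prod>x\<in>(Y \<inter> leaves r) - {a, b}. Mk \<kappa> z (s x)))"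
        by (simp add: ac_simps)
      also have "(\<Prod>x\<in>Y \<inter> leaves l. Mk \<kappa> z (s x)) * (\<Prod>x\<in>(Y \<inter> leaves r) - {a, b}. Mk \<kappa> z (s x))
          = (\<Prod>x\<in>(Y \<inter> leaves l) \<union> ((Y \<inter> leaves r) - {a, b}). Mk \<kappa> z (s x))"
        by (rule prod.union_disjoint[symmetric]) (use wl(3) in auto)
      also have "(Y \<inter> leaves l) \<union> ((Y \<inter> leaves r) - {a, b}) = (Y \<inter> leaves (Node l r)) - {a, b}"
        using abl by auto
      finally show ?thesis using top by simp
    qed
  qed
qed


lemma triple_sum:
  fixes f g :: "'a \<Rightarrow> real"
  shows "(\<Sum>l\<in>A. (\<Sum>z\<in>A. f z * M z l) * (\<Sum>z'\<in>A. N l z' * g z')) = (\<Sum>z\<in>A. \<Sum>z'\<in>A. f z * g z' * (\<Sum>l\<in>A. M z l * N l z'))"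
proof -
  have "(\<Sum>l\<in>A. (\<Sum>z\<in>A. f z * M z l) * (\<Sum>z'\<in>A. N l z' * g z')) = (\<Sum>l\<in>A. \<Sum>z\<in>A. \<Sum>z'\<in>A. f z * g z' * (M z l * N l z'))"
    by (simp add: sum_product mult_ac)
  also have "\<dots> = (\<Sum>z\<in>A. \<Sum>l\<in>A. \<Sum>z'\<in>A. f z * g z' * (M z l * N l z'))" by (rule sum.swap)
  also have "\<dots> = (\<Sum>z\<in>A. \<Sum>z'\<in>A. \<Sum>l\<in>A. f z * g z' * (M z l * N l z'))" by (rule sum.cong[OF refl], rule sum.swap)
  also have "\<dots> = (\<Sum>z\<in>A. \<Sum>z'\<in>A. f z * g z' * (\<Sum>l\<in>A. M z l * N l z'))" by (simp add: sum_distrib_left)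
  finally show ?thesis .
qed

definition Nm :: "nat \<Rightarrow> nat \<Rightarrow> nat \<Rightarrow> real" where
  "Nm \<kappa> x y = (if x = y then 2 else 0) - 1 / real \<kappa>"

definition Phi :: "nat \<Rightarrow> nat \<Rightarrow> nat \<Rightarrow> nat \<Rightarrow> real" where
  "Phi \<kappa> i k l = (\<Sum>z<\<kappa>. Mk \<kappa> z i * Mk \<kappa> z k * Mk \<kappa> z l) / real \<kappa>"

definition Cinv :: "nat \<Rightarrow> nat \<Rightarrow> nat \<Rightarrow> nat \<Rightarrow> real" where
  "Cinv \<kappa> i l k = real \<kappa> * (\<Sum>z<\<kappa>. Nm \<kappa> l z * (Nm \<kappa> z k / Mk \<kappa> z i))"

lemma Mk_sym: "Mk \<kappa> z y = Mk \<kappa> y z" by (simp add: Mk_def)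
lemma Mk_pos: "0 < \<kappa> \<Longrightarrow> Mk \<kappa> z y > 0" unfolding Mk_def by (auto intro!: add_pos_pos add_nonneg_pos)

lemma Phi_sym: "Phi \<kappa> i k l = Phi \<kappa> i l k" by (simp add: Phi_def mult_ac)

lemma MN:
  assumes "z < \<kappa>" "z' < \<kappa>"
  shows "(\<Sum>l<\<kappa>. Mk \<kappa> z l * Nm \<kappa> l z') = (if z = z' then 1 else 0)"
proof -
  have k: "real \<kappa> > 0" using assms by simp
  have e: "\<And>l. Mk \<kappa> z l * Nm \<kappa> l z' =
      (if z = l then (if l = z' then 1 else 0) else 0) - (if z = l then 1 / (2 * real \<kappa>) else 0)
      + (if l = z' then 1 / real \<kappa> else 0) - 1 / (2 * real \<kappa> * real \<kappa>)"
    using k by (auto simp: Mk_def Nm_def field_simps)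
  have "(\<Sum>l<\<kappa>. Mk \<kappa> z l * Nm \<kappa> l z') =
      (\<Sum>l<\<kappa>. (if z = l then (if l = z' then 1 else 0) else 0)) - (\<Sum>l<\<kappa>. (if z = l then 1 / (2 * real \<kappa>) else 0))
      + (\<Sum>l<\<kappa>. (if l = z' then 1 / real \<kappa> else 0)) - (\<Sum>l<\<kappa>. 1 / (2 * real \<kappa> * real \<kappa>))"
    unfolding e by (simp add: sum.distrib sum_subtractf)
  also have "\<dots> = (if z = z' then 1 else 0) - 1 / (2 * real \<kappa>) + 1 / real \<kappa> - real \<kappa> * (1 / (2 * real \<kappa> * real \<kappa>))"
    using assms by (simp add: sum.delta sum.delta')
  also have "\<dots> = (if z = z' then 1 else 0)" using k by (simp add: field_simps)
  finally show ?thesis .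
qed

lemma BC:
  assumes "0 < \<kappa>" "i < \<kappa>" "k < \<kappa>" "k' < \<kappa>"
  shows "(\<Sum>l<\<kappa>. Phi \<kappa> i k l * Cinv \<kappa> i l k') = (if k = k' then 1 else 0)"
proof -
  let ?A = "{..<\<kappa>}"
  define f where "f z = Mk \<kappa> z i * Mk \<kappa> z k" for z
  define g where "g z' = Nm \<kappa> z' k' / Mk \<kappa> z' i" for z'
  have k: "real \<kappa> \<noteq> 0" using assms by simp
  have mz: "\<And>z. Mk \<kappa> z i \<noteq> 0" using Mk_pos[OF assms(1)] by (metis less_irrefl)
  have "(\<Sum>l<\<kappa>. Phi \<kappa> i k l * Cinv \<kappa> i l k') = (\<Sum>l\<in>?A. (\<Sum>z\<in>?A. f z * Mk \<kappa> z l) * (\<Sum>z'\<in>?A. Nm \<kappa> l z' * g z'))"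
    unfolding Phi_def Cinv_def f_def g_def using k by simp
  also have "\<dots> = (\<Sum>z\<in>?A. \<Sum>z'\<in>?A. f z * g z' * (\<Sum>l\<in>?A. Mk \<kappa> z l * Nm \<kappa> l z'))"
    by (rule triple_sum)
  also have "\<dots> = (\<Sum>z\<in>?A. \<Sum>z'\<in>?A. if z = z' then f z * g z' else 0)"
    by (intro sum.cong refl) (simp add: MN)
  also have "\<dots> = (\<Sum>z\<in>?A. f z * g z)"
    by (intro sum.cong refl) (simp add: sum.delta)
  also have "\<dots> = (\<Sum>z\<in>?A. Mk \<kappa> k z * Nm \<kappa> z k')"
    by (intro sum.cong refl) (simp add: f_def g_def Mk_sym[of \<kappa> _ k] mz)
  also have "\<dots> = (if k = k' then 1 else 0)" by (rule MN[OF assms(3,4)])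
  finally show ?thesis .
qed

lemma sum_pairs:
  fixes f :: "nat \<Rightarrow> real"
  shows "(\<Sum>c<\<kappa>*\<kappa>. f c) = (\<Sum>j<\<kappa>. \<Sum>l<\<kappa>. f (j*\<kappa>+l))"
proof -
  have bij: "bij_betw (\<lambda>(j,l). j*\<kappa>+l) ({..<\<kappa>} \<times> {..<\<kappa>}) {..<\<kappa>*\<kappa>}"
  proof (rule bij_betw_imageI)
    show "inj_on (\<lambda>(j,l). j*\<kappa>+l) ({..<\<kappa>} \<times> {..<\<kappa>})"
    proof (rule inj_onI)
      fix p q assume p: "p \<in> {..<\<kappa>} \<times> {..<\<kappa>}" and q: "q \<in> {..<\<kappa>} \<times> {..<\<kappa>}"
        and e: "(\<lambda>(j,l). j*\<kappa>+l) p = (\<lambda>(j,l). j*\<kappa>+l) q"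
      obtain j l where pj: "p = (j,l)" by (cases p)
      obtain j' l' where qj: "q = (j',l')" by (cases q)
      have h: "j < \<kappa>" "l < \<kappa>" "j' < \<kappa>" "l' < \<kappa>" using p q pj qj by auto
      have h5: "j*\<kappa>+l = j'*\<kappa>+l'" using e pj qj by simp
      have d: "(j*\<kappa>+l) div \<kappa> = j" "(j*\<kappa>+l) mod \<kappa> = l" using h by auto
      have d': "(j'*\<kappa>+l') div \<kappa> = j'" "(j'*\<kappa>+l') mod \<kappa> = l'" using h by auto
      have "j = j'" using d(1) d'(1) h5 by simp
      moreover have "l = l'" using d(2) d'(2) h5 by simp
      ultimately show "p = q" using pj qj by simp
    qed
    show "(\<lambda>(j,l). j*\<kappa>+l) ` ({..<\<kappa>} \<times> {..<\<kappa>}) = {..<\<kappa>*\<kappa>}"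
    proof (rule equalityI; rule subsetI)
      fix c assume "c \<in> (\<lambda>(j,l). j*\<kappa>+l) ` ({..<\<kappa>} \<times> {..<\<kappa>})"
      then obtain j l where "j < \<kappa>" "l < \<kappa>" "c = j*\<kappa>+l" by auto
      moreover have "j*\<kappa>+l < \<kappa>*\<kappa>"
      proof -
        have "j*\<kappa>+l < j*\<kappa>+\<kappa>" using \<open>l < \<kappa>\<close> by simp
        also have "\<dots> = (j+1)*\<kappa>" by simp
        also have "\<dots> \<le> \<kappa>*\<kappa>" by (rule mult_le_mono1) (use \<open>j < \<kappa>\<close> in simp)
        finally show ?thesis .
      qed
      ultimately show "c \<in> {..<\<kappa>*\<kappa>}" by simp
    next
      fix c assume c: "c \<in> {..<\<kappa>*\<kappa>}"
      then have k: "0 < \<kappa>" by (cases \<kappa>) auto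
      have "c div \<kappa> < \<kappa>" using c by (simp add: less_mult_imp_div_less)
      moreover have "c mod \<kappa> < \<kappa>" using k by simp
      moreover have "c = (c div \<kappa>)*\<kappa> + c mod \<kappa>" by simp
      ultimately show "c \<in> (\<lambda>(j,l). j*\<kappa>+l) ` ({..<\<kappa>} \<times> {..<\<kappa>})"
        by (intro image_eqI[of _ _ "(c div \<kappa>, c mod \<kappa>)"]) auto
    qed
  qed
  have "(\<Sum>c<\<kappa>*\<kappa>. f c) = (\<Sum>x\<in>{..<\<kappa>} \<times> {..<\<kappa>}. f ((\<lambda>(j,l). j*\<kappa>+l) x))"
    using sum.reindex_bij_betw[OF bij, of f] by simp
  also have "\<dots> = (\<Sum>(j,l)\<in>{..<\<kappa>} \<times> {..<\<kappa>}. f (j*\<kappa>+l))"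
    by (rule sum.cong) auto
  also have "\<dots> = (\<Sum>j<\<kappa>. \<Sum>l<\<kappa>. f (j*\<kappa>+l))"
    by (rule sum.cartesian_product[symmetric])
  finally show ?thesis .
qed

definition A1 :: "nat \<Rightarrow> real mat" where
  "A1 \<kappa> = mat (\<kappa>*\<kappa>) (\<kappa>*\<kappa>) (\<lambda>(r,c). if r div \<kappa> = c div \<kappa> then Phi \<kappa> (r div \<kappa>) (r mod \<kappa>) (c mod \<kappa>) else 0)"
definition G1 :: "nat \<Rightarrow> real mat" where
  "G1 \<kappa> = mat (\<kappa>*\<kappa>) (\<kappa>*\<kappa>) (\<lambda>(r,c). if r div \<kappa> = c div \<kappa> then Cinv \<kappa> (r div \<kappa>) (r mod \<kappa>) (c mod \<kappa>) else 0)"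
definition A2 :: "nat \<Rightarrow> real mat" where
  "A2 \<kappa> = mat (\<kappa>*\<kappa>) (\<kappa>*\<kappa>) (\<lambda>(r,c). if r mod \<kappa> = c mod \<kappa> then Phi \<kappa> (r mod \<kappa>) (r div \<kappa>) (c div \<kappa>) else 0)"
definition G2 :: "nat \<Rightarrow> real mat" where
  "G2 \<kappa> = mat (\<kappa>*\<kappa>) (\<kappa>*\<kappa>) (\<lambda>(r,c). if r mod \<kappa> = c mod \<kappa> then Cinv \<kappa> (r mod \<kappa>) (r div \<kappa>) (c div \<kappa>) else 0)"

lemma divmod_lt: "(r::nat) < \<kappa>*\<kappa> \<Longrightarrow> r div \<kappa> < \<kappa> \<and> r mod \<kappa> < \<kappa>"
  by (cases "\<kappa> = 0") (auto simp: less_mult_imp_div_less)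

lemma prod_entry:
  assumes "A \<in> carrier_mat n n" "B \<in> carrier_mat n n" "r < n" "r' < n"
  shows "(A * B) $$ (r, r') = (\<Sum>c<n. A $$ (r, c) * B $$ (c, r'))"
  using assms by (simp add: scalar_prod_def lessThan_atLeast0)

lemma A1G1: assumes "0 < \<kappa>" shows "A1 \<kappa> * G1 \<kappa> = 1\<^sub>m (\<kappa>*\<kappa>)"
proof (rule eq_matI)
  show "dim_row (A1 \<kappa> * G1 \<kappa>) = dim_row (1\<^sub>m (\<kappa>*\<kappa>))" "dim_col (A1 \<kappa> * G1 \<kappa>) = dim_col (1\<^sub>m (\<kappa>*\<kappa>))"
    by (simp_all add: A1_def G1_def)
  fix r r' assume "r < dim_row (1\<^sub>m (\<kappa>*\<kappa>))" "r' < dim_col (1\<^sub>m (\<kappa>*\<kappa>))"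
  then have rr: "r < \<kappa>*\<kappa>" "r' < \<kappa>*\<kappa>" by simp_all
  define i where "i = r div \<kappa>"
  define k where "k = r mod \<kappa>"
  define i' where "i' = r' div \<kappa>"
  define k' where "k' = r' mod \<kappa>"
  have b: "i < \<kappa>" "k < \<kappa>" "i' < \<kappa>" "k' < \<kappa>" using divmod_lt[OF rr(1)] divmod_lt[OF rr(2)] by (auto simp: i_def k_def i'_def k'_def)
  have "(A1 \<kappa> * G1 \<kappa>) $$ (r, r') = (\<Sum>c<\<kappa>*\<kappa>. A1 \<kappa> $$ (r, c) * G1 \<kappa> $$ (c, r'))"
    by (rule prod_entry[OF _ _ rr]) (simp_all add: A1_def G1_def)
  also have "\<dots> = (\<Sum>j<\<kappa>. \<Sum>l<\<kappa>. A1 \<kappa> $$ (r, j*\<kappa>+l) * G1 \<kappa> $$ (j*\<kappa>+l, r'))"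
    by (rule sum_pairs)
  also have "\<dots> = (\<Sum>j<\<kappa>. \<Sum>l<\<kappa>. (if i = j then Phi \<kappa> i k l else 0) * (if j = i' then Cinv \<kappa> j l k' else 0))"
  proof (intro sum.cong refl)
    fix j l assume "j \<in> {..<\<kappa>}" "l \<in> {..<\<kappa>}"
    then have jl: "j < \<kappa>" "l < \<kappa>" by auto
    have lt: "j*\<kappa>+l < \<kappa>*\<kappa>"
    proof -
      have "j*\<kappa>+l < (j+1)*\<kappa>" using jl by simp
      also have "\<dots> \<le> \<kappa>*\<kappa>" by (rule mult_le_mono1) (use jl in simp)
      finally show ?thesis .
    qed
    have dm: "(j*\<kappa>+l) div \<kappa> = j" "(j*\<kappa>+l) mod \<kappa> = l" using jl by auto
    have e1: "A1 \<kappa> $$ (r, j*\<kappa>+l) = (if i = j then Phi \<kappa> i k l else 0)"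
      using rr lt dm jl by (simp add: A1_def i_def k_def)
    have e2: "G1 \<kappa> $$ (j*\<kappa>+l, r') = (if j = i' then Cinv \<kappa> j l k' else 0)"
      using rr lt dm jl by (simp add: G1_def i'_def k'_def)
    show "A1 \<kappa> $$ (r, j*\<kappa>+l) * G1 \<kappa> $$ (j*\<kappa>+l, r') = (if i = j then Phi \<kappa> i k l else 0) * (if j = i' then Cinv \<kappa> j l k' else 0)"
      unfolding e1 e2 ..
  qed
  also have "\<dots> = (\<Sum>j<\<kappa>. if j = i then (if i = i' then (\<Sum>l<\<kappa>. Phi \<kappa> i k l * Cinv \<kappa> i l k') else 0) else 0)"
  proof (rule sum.cong[OF refl])
    fix j
    show "(\<Sum>l<\<kappa>. (if i = j then Phi \<kappa> i k l else 0) * (if j = i' then Cinv \<kappa> j l k' else 0))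
      = (if j = i then (if i = i' then (\<Sum>l<\<kappa>. Phi \<kappa> i k l * Cinv \<kappa> i l k') else 0) else 0)"
      by (cases "j = i"; cases "i = i'") simp_all
  qed
  also have "\<dots> = (if i = i' then (\<Sum>l<\<kappa>. Phi \<kappa> i k l * Cinv \<kappa> i l k') else 0)"
    using b by (simp add: sum.delta')
  also have "\<dots> = (if i = i' \<and> k = k' then 1 else 0)" by (subst BC[OF assms b(1,2,4)]) simp
  also have "\<dots> = 1\<^sub>m (\<kappa>*\<kappa>) $$ (r, r')"
  proof -
    have "(i = i' \<and> k = k') = (r = r')"
      unfolding i_def k_def i'_def k'_def by (metis div_mult_mod_eq)
    then show ?thesis using rr by simp
  qed
  finally show "(A1 \<kappa> * G1 \<kappa>) $$ (r, r') = 1\<^sub>m (\<kappa>*\<kappa>) $$ (r, r')" .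
qed

lemma A2G2: assumes "0 < \<kappa>" shows "A2 \<kappa> * G2 \<kappa> = 1\<^sub>m (\<kappa>*\<kappa>)"
proof (rule eq_matI)
  show "dim_row (A2 \<kappa> * G2 \<kappa>) = dim_row (1\<^sub>m (\<kappa>*\<kappa>))" "dim_col (A2 \<kappa> * G2 \<kappa>) = dim_col (1\<^sub>m (\<kappa>*\<kappa>))"
    by (simp_all add: A2_def G2_def)
  fix r r' assume "r < dim_row (1\<^sub>m (\<kappa>*\<kappa>))" "r' < dim_col (1\<^sub>m (\<kappa>*\<kappa>))"
  then have rr: "r < \<kappa>*\<kappa>" "r' < \<kappa>*\<kappa>" by simp_all
  define i where "i = r div \<kappa>"
  define k where "k = r mod \<kappa>"
  define i' where "i' = r' div \<kappa>"
  define k' where "k' = r' mod \<kappa>"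
  have b: "i < \<kappa>" "k < \<kappa>" "i' < \<kappa>" "k' < \<kappa>" using divmod_lt[OF rr(1)] divmod_lt[OF rr(2)] by (auto simp: i_def k_def i'_def k'_def)
  have "(A2 \<kappa> * G2 \<kappa>) $$ (r, r') = (\<Sum>c<\<kappa>*\<kappa>. A2 \<kappa> $$ (r, c) * G2 \<kappa> $$ (c, r'))"
    by (rule prod_entry[OF _ _ rr]) (simp_all add: A2_def G2_def)
  also have "\<dots> = (\<Sum>j<\<kappa>. \<Sum>l<\<kappa>. A2 \<kappa> $$ (r, j*\<kappa>+l) * G2 \<kappa> $$ (j*\<kappa>+l, r'))"
    by (rule sum_pairs)
  also have "\<dots> = (\<Sum>j<\<kappa>. \<Sum>l<\<kappa>. (if k = l then Phi \<kappa> k i j else 0) * (if l = k' then Cinv \<kappa> l j i' else 0))"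
  proof (intro sum.cong refl)
    fix j l assume "j \<in> {..<\<kappa>}" "l \<in> {..<\<kappa>}"
    then have jl: "j < \<kappa>" "l < \<kappa>" by auto
    have lt: "j*\<kappa>+l < \<kappa>*\<kappa>"
    proof -
      have "j*\<kappa>+l < (j+1)*\<kappa>" using jl by simp
      also have "\<dots> \<le> \<kappa>*\<kappa>" by (rule mult_le_mono1) (use jl in simp)
      finally show ?thesis .
    qed
    have dm: "(j*\<kappa>+l) div \<kappa> = j" "(j*\<kappa>+l) mod \<kappa> = l" using jl by auto
    have e1: "A2 \<kappa> $$ (r, j*\<kappa>+l) = (if k = l then Phi \<kappa> k i j else 0)"
      using rr lt dm jl by (simp add: A2_def i_def k_def)
    have e2: "G2 \<kappa> $$ (j*\<kappa>+l, r') = (if l = k' then Cinv \<kappa> l j i' else 0)"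
      using rr lt dm jl by (simp add: G2_def i'_def k'_def)
    show "A2 \<kappa> $$ (r, j*\<kappa>+l) * G2 \<kappa> $$ (j*\<kappa>+l, r') = (if k = l then Phi \<kappa> k i j else 0) * (if l = k' then Cinv \<kappa> l j i' else 0)"
      unfolding e1 e2 ..
  qed
  also have "\<dots> = (\<Sum>l<\<kappa>. \<Sum>j<\<kappa>. (if k = l then Phi \<kappa> k i j else 0) * (if l = k' then Cinv \<kappa> l j i' else 0))"
    by (rule sum.swap)
  also have "\<dots> = (\<Sum>l<\<kappa>. if l = k then (if k = k' then (\<Sum>j<\<kappa>. Phi \<kappa> k i j * Cinv \<kappa> k j i') else 0) else 0)"
  proof (rule sum.cong[OF refl])
    fix l
    show "(\<Sum>j<\<kappa>. (if k = l then Phi \<kappa> k i j else 0) * (if l = k' then Cinv \<kappa> l j i' else 0))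
      = (if l = k then (if k = k' then (\<Sum>j<\<kappa>. Phi \<kappa> k i j * Cinv \<kappa> k j i') else 0) else 0)"
      by (cases "l = k"; cases "k = k'") simp_all
  qed
  also have "\<dots> = (if k = k' then (\<Sum>j<\<kappa>. Phi \<kappa> k i j * Cinv \<kappa> k j i') else 0)"
    using b by (simp add: sum.delta')
  also have "\<dots> = (if i = i' \<and> k = k' then 1 else 0)" by (subst BC[OF assms b(2,1,3)]) auto
  also have "\<dots> = 1\<^sub>m (\<kappa>*\<kappa>) $$ (r, r')"
  proof -
    have "(i = i' \<and> k = k') = (r = r')"
      unfolding i_def k_def i'_def k'_def by (metis div_mult_mod_eq)
    then show ?thesis using rr by simp
  qed
  finally show "(A2 \<kappa> * G2 \<kappa>) $$ (r, r') = 1\<^sub>m (\<kappa>*\<kappa>) $$ (r, r')" .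
qed

lemma det_inv_nz:
  assumes "A \<in> carrier_mat n n" "G \<in> carrier_mat n n" "A * G = 1\<^sub>m n"
  shows "det A \<noteq> (0::real)"
proof
  assume "det A = 0"
  have "det (A * G) = det A * det G" by (rule det_mult[OF assms(1,2)])
  then show False using assms(3) \<open>det A = 0\<close> by simp
qed

lemma det_A1: "0 < \<kappa> \<Longrightarrow> det (A1 \<kappa>) \<noteq> 0"
  by (rule det_inv_nz[OF _ _ A1G1]) (auto simp: A1_def G1_def)

lemma det_A2: "0 < \<kappa> \<Longrightarrow> det (A2 \<kappa>) \<noteq> 0"
  by (rule det_inv_nz[OF _ _ A2G2]) (auto simp: A2_def G2_def)


lemma asg4_mem:
  assumes "i < \<kappa>" "j < \<kappa>" "k < \<kappa>" "l < \<kappa>"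
  shows "asg4 x y z w i j k l \<in> assignments {x,y,z,w} \<kappa>"
  using assms by (auto simp: assignments_def asg4_def PiE_def Pi_def extensional_def)

lemma quartet_marg:
  assumes "well_labelled T" "0 < \<kappa>" "v \<in> subtrees T" "leaves v \<inter> Y = {a,b}" "Y = {a,b,c,d}"
    "distinct [a,b,c,d]" "Y \<subseteq> leaves T" "s \<in> assignments Y \<kappa>"
  shows "marg (leaves T) \<kappa> (Pw \<kappa> (htV (leaves v)) T) Y s = (if s a = s b then Phi \<kappa> (s a) (s c) (s d) else 0)"
proof -
  let ?V = "leaves v"
  have sY: "\<forall>x\<in>Y. s x < \<kappa>" using assms(8) by (auto simp: assignments_def PiE_def Pi_def)
  have ab: "a \<noteq> b" using assms(6) by simp
  have cT: "c \<in> leaves T" "a \<in> leaves T" using assms(5,7) by auto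
  have cV: "c \<notin> ?V"
  proof
    assume "c \<in> ?V"
    then have "c \<in> leaves v \<inter> Y" using assms(5) by simp
    then have "c \<in> {a,b}" using assms(4) by simp
    then show False using assms(6) by auto
  qed
  have h1: "htV ?V T = 1"
  proof (cases T)
    case (Leaf x)
    then have "c = x" "a = x" using cT by auto
    then show ?thesis using assms(6) by simp
  next
    case (Node l r)
    then show ?thesis using cT cV by auto
  qed
  have rest: "(Y \<inter> leaves T) - {a, b} = {c, d}" using assms(5,6,7) by auto
  have cd: "c \<noteq> d" using assms(6) by simp
  have Lz: "\<And>z. z < \<kappa> \<Longrightarrow> Lm \<kappa> (htV ?V) Y T z s = (if s a = s b then Mk \<kappa> z (s a) else 0) * (Mk \<kappa> z (s c) * Mk \<kappa> z (s d))"
  proof -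
    fix z assume z: "z < \<kappa>"
    have "(\<Sum>w<\<kappa>. Em \<kappa> (1 - htV ?V T) z w * Lm \<kappa> (htV ?V) Y T w s) = (\<Sum>w<\<kappa>. if z = w then Lm \<kappa> (htV ?V) Y T w s else 0)"
      by (rule sum.cong) (auto simp: Em_def h1 simp del: Lm.simps htV.simps)
    also have "\<dots> = Lm \<kappa> (htV ?V) Y T z s" using z by (simp add: sum.delta)
    finally have e: "(\<Sum>w<\<kappa>. Em \<kappa> (1 - htV ?V T) z w * Lm \<kappa> (htV ?V) Y T w s) = Lm \<kappa> (htV ?V) Y T z s" .
    have "Lm \<kappa> (htV ?V) Y T z s = (if s a = s b then Mk \<kappa> z (s a) else 0) * (\<Prod>x\<in>(Y \<inter> leaves T) - {a, b}. Mk \<kappa> z (s x))"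
      using Lm_path[OF assms(3,1,4) ab z sY] e by simp
    also have "(\<Prod>x\<in>(Y \<inter> leaves T) - {a, b}. Mk \<kappa> z (s x)) = Mk \<kappa> z (s c) * Mk \<kappa> z (s d)"
      unfolding rest using cd by simp
    finally show "Lm \<kappa> (htV ?V) Y T z s = (if s a = s b then Mk \<kappa> z (s a) else 0) * (Mk \<kappa> z (s c) * Mk \<kappa> z (s d))" .
  qed
  have "marg (leaves T) \<kappa> (Pw \<kappa> (htV ?V) T) Y s = (\<Sum>z<\<kappa>. Lm \<kappa> (htV ?V) Y T z s) / real \<kappa>"
    by (rule marg_Pw[OF assms(1,2,7,8)])
  also have "\<dots> = (\<Sum>z<\<kappa>. (if s a = s b then Mk \<kappa> z (s a) else 0) * (Mk \<kappa> z (s c) * Mk \<kappa> z (s d))) / real \<kappa>"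
    using Lz by simp
  also have "\<dots> = (if s a = s b then Phi \<kappa> (s a) (s c) (s d) else 0)"
    by (simp add: Phi_def mult.assoc)
  finally show ?thesis .
qed

lemma flat_A1:
  assumes "distinct [a,b,c,d]" "\<And>s. s \<in> assignments {a,b,c,d} \<kappa> \<Longrightarrow> P s = (if s a = s b then Phi \<kappa> (s a) (s c) (s d) else 0)"
  shows "flat \<kappa> P a c b d = A1 \<kappa>" "flat \<kappa> P a d b c = A1 \<kappa>"
proof -
  show "flat \<kappa> P a c b d = A1 \<kappa>"
  proof (rule eq_matI)
    fix r c' assume "r < dim_row (A1 \<kappa>)" "c' < dim_col (A1 \<kappa>)"
    then have rc: "r < \<kappa>*\<kappa>" "c' < \<kappa>*\<kappa>" by (simp_all add: A1_def)
    let ?s = "asg4 a c b d (r div \<kappa>) (r mod \<kappa>) (c' div \<kappa>) (c' mod \<kappa>)"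
    have m: "?s \<in> assignments {a,b,c,d} \<kappa>"
      using asg4_mem[of "r div \<kappa>" \<kappa> "r mod \<kappa>" "c' div \<kappa>" "c' mod \<kappa>" a c b d] divmod_lt[OF rc(1)] divmod_lt[OF rc(2)]
      by (simp add: insert_commute)
    have v: "?s a = r div \<kappa>" "?s c = r mod \<kappa>" "?s b = c' div \<kappa>" "?s d = c' mod \<kappa>"
      using assms(1) by (auto simp: asg4_def)
    have Pv: "P ?s = (if r div \<kappa> = c' div \<kappa> then Phi \<kappa> (r div \<kappa>) (r mod \<kappa>) (c' mod \<kappa>) else 0)" using assms(2)[OF m] unfolding v .
    have F: "flat \<kappa> P a c b d $$ (r, c') = P ?s" using rc by (simp add: flat_def)
    have Av: "A1 \<kappa> $$ (r, c') = (if r div \<kappa> = c' div \<kappa> then Phi \<kappa> (r div \<kappa>) (r mod \<kappa>) (c' mod \<kappa>) else 0)" using rc by (simp add: A1_def)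
    show "flat \<kappa> P a c b d $$ (r, c') = A1 \<kappa> $$ (r, c')"
      unfolding F Pv Av by (auto simp: Phi_sym[of \<kappa> _ "c' mod \<kappa>"])
  qed (simp_all add: flat_def A1_def)
  show "flat \<kappa> P a d b c = A1 \<kappa>"
  proof (rule eq_matI)
    fix r c' assume "r < dim_row (A1 \<kappa>)" "c' < dim_col (A1 \<kappa>)"
    then have rc: "r < \<kappa>*\<kappa>" "c' < \<kappa>*\<kappa>" by (simp_all add: A1_def)
    let ?s = "asg4 a d b c (r div \<kappa>) (r mod \<kappa>) (c' div \<kappa>) (c' mod \<kappa>)"
    have m: "?s \<in> assignments {a,b,c,d} \<kappa>"
      using asg4_mem[of "r div \<kappa>" \<kappa> "r mod \<kappa>" "c' div \<kappa>" "c' mod \<kappa>" a d b c] divmod_lt[OF rc(1)] divmod_lt[OF rc(2)]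
      by (simp add: insert_commute)
    have v: "?s a = r div \<kappa>" "?s d = r mod \<kappa>" "?s b = c' div \<kappa>" "?s c = c' mod \<kappa>"
      using assms(1) by (auto simp: asg4_def)
    have Pv: "P ?s = (if r div \<kappa> = c' div \<kappa> then Phi \<kappa> (r div \<kappa>) (c' mod \<kappa>) (r mod \<kappa>) else 0)" using assms(2)[OF m] unfolding v .
    have F: "flat \<kappa> P a d b c $$ (r, c') = P ?s" using rc by (simp add: flat_def)
    have Av: "A1 \<kappa> $$ (r, c') = (if r div \<kappa> = c' div \<kappa> then Phi \<kappa> (r div \<kappa>) (r mod \<kappa>) (c' mod \<kappa>) else 0)" using rc by (simp add: A1_def)
    show "flat \<kappa> P a d b c $$ (r, c') = A1 \<kappa> $$ (r, c')"
      unfolding F Pv Av by (auto simp: Phi_sym[of \<kappa> _ "c' mod \<kappa>"])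
  qed (simp_all add: flat_def A1_def)
qed

lemma flat_A2:
  assumes "distinct [a,b,c,d]" "\<And>s. s \<in> assignments {a,b,c,d} \<kappa> \<Longrightarrow> P s = (if s c = s d then Phi \<kappa> (s c) (s a) (s b) else 0)"
  shows "flat \<kappa> P a c b d = A2 \<kappa>" "flat \<kappa> P a d b c = A2 \<kappa>"
proof -
  show "flat \<kappa> P a c b d = A2 \<kappa>"
  proof (rule eq_matI)
    fix r c' assume "r < dim_row (A2 \<kappa>)" "c' < dim_col (A2 \<kappa>)"
    then have rc: "r < \<kappa>*\<kappa>" "c' < \<kappa>*\<kappa>" by (simp_all add: A2_def)
    let ?s = "asg4 a c b d (r div \<kappa>) (r mod \<kappa>) (c' div \<kappa>) (c' mod \<kappa>)"
    have m: "?s \<in> assignments {a,b,c,d} \<kappa>"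
      using asg4_mem[of "r div \<kappa>" \<kappa> "r mod \<kappa>" "c' div \<kappa>" "c' mod \<kappa>" a c b d] divmod_lt[OF rc(1)] divmod_lt[OF rc(2)]
      by (simp add: insert_commute)
    have v: "?s a = r div \<kappa>" "?s c = r mod \<kappa>" "?s b = c' div \<kappa>" "?s d = c' mod \<kappa>"
      using assms(1) by (auto simp: asg4_def)
    have Pv: "P ?s = (if r mod \<kappa> = c' mod \<kappa> then Phi \<kappa> (r mod \<kappa>) (r div \<kappa>) (c' div \<kappa>) else 0)" using assms(2)[OF m] unfolding v .
    have F: "flat \<kappa> P a c b d $$ (r, c') = P ?s" using rc by (simp add: flat_def)
    have Av: "A2 \<kappa> $$ (r, c') = (if r mod \<kappa> = c' mod \<kappa> then Phi \<kappa> (r mod \<kappa>) (r div \<kappa>) (c' div \<kappa>) else 0)" using rc by (simp add: A2_def)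
    show "flat \<kappa> P a c b d $$ (r, c') = A2 \<kappa> $$ (r, c')"
      unfolding F Pv Av by (auto simp: Phi_sym[of \<kappa> _ "c' mod \<kappa>"])
  qed (simp_all add: flat_def A2_def)
  show "flat \<kappa> P a d b c = A2 \<kappa>"
  proof (rule eq_matI)
    fix r c' assume "r < dim_row (A2 \<kappa>)" "c' < dim_col (A2 \<kappa>)"
    then have rc: "r < \<kappa>*\<kappa>" "c' < \<kappa>*\<kappa>" by (simp_all add: A2_def)
    let ?s = "asg4 a d b c (r div \<kappa>) (r mod \<kappa>) (c' div \<kappa>) (c' mod \<kappa>)"
    have m: "?s \<in> assignments {a,b,c,d} \<kappa>"
      using asg4_mem[of "r div \<kappa>" \<kappa> "r mod \<kappa>" "c' div \<kappa>" "c' mod \<kappa>" a d b c] divmod_lt[OF rc(1)] divmod_lt[OF rc(2)]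
      by (simp add: insert_commute)
    have v: "?s a = r div \<kappa>" "?s d = r mod \<kappa>" "?s b = c' div \<kappa>" "?s c = c' mod \<kappa>"
      using assms(1) by (auto simp: asg4_def)
    have Pv: "P ?s = (if c' mod \<kappa> = r mod \<kappa> then Phi \<kappa> (c' mod \<kappa>) (r div \<kappa>) (c' div \<kappa>) else 0)" using assms(2)[OF m] unfolding v .
    have F: "flat \<kappa> P a d b c $$ (r, c') = P ?s" using rc by (simp add: flat_def)
    have Av: "A2 \<kappa> $$ (r, c') = (if r mod \<kappa> = c' mod \<kappa> then Phi \<kappa> (r mod \<kappa>) (r div \<kappa>) (c' div \<kappa>) else 0)" using rc by (simp add: A2_def)
    show "flat \<kappa> P a d b c $$ (r, c') = A2 \<kappa> $$ (r, c')"
      unfolding F Pv Av by (auto simp: Phi_sym[of \<kappa> _ "c' mod \<kappa>"])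
  qed (simp_all add: flat_def A2_def)
qed


lemma foldr_carrier: "(\<forall>M\<in>set Ms. M \<in> carrier_mat n nc) \<Longrightarrow> foldr (+) Ms (0\<^sub>m n nc) \<in> carrier_mat n nc"
  by (induction Ms) auto

lemma foldr_entry:
  "(\<forall>M\<in>set Ms. M \<in> carrier_mat n nc) \<Longrightarrow> r < n \<Longrightarrow> c < nc \<Longrightarrow>
   foldr (+) Ms (0\<^sub>m n nc) $$ (r, c) = sum_list (map (\<lambda>M. M $$ (r, c)) Ms)"
proof (induction Ms)
  case Nil then show ?case by simp
next
  case (Cons M Ms)
  have "foldr (+) Ms (0\<^sub>m n nc) \<in> carrier_mat n nc" by (rule foldr_carrier) (use Cons.prems(1) in simp)
  then show ?case using Cons by simp
qed

lemma foldr_rank: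
  fixes Ms :: "'a::field mat list"
  shows "(\<forall>M\<in>set Ms. M \<in> carrier_mat n nc) \<Longrightarrow> vec_space.rank n (foldr (+) Ms (0\<^sub>m n nc)) \<le> sum_list (map (vec_space.rank n) Ms)"
proof (induction Ms)
  case Nil then show ?case by (simp add: vec_space.rank_0I)
next
  case (Cons M Ms)
  have c: "foldr (+) Ms (0\<^sub>m n nc) \<in> carrier_mat n nc" by (rule foldr_carrier) (use Cons.prems(1) in simp)
  have "vec_space.rank n (M + foldr (+) Ms (0\<^sub>m n nc)) \<le> vec_space.rank n M + vec_space.rank n (foldr (+) Ms (0\<^sub>m n nc))"
    by (rule vec_space.rank_subadditive) (use Cons.prems c in auto)
  then show ?case using Cons by simp
qed

lemma rank_sum_rank1:
  fixes A :: "'a::field mat"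
  assumes "finite S" "A \<in> carrier_mat n nc"
    and "\<And>r c. r < n \<Longrightarrow> c < nc \<Longrightarrow> A $$ (r, c) = (\<Sum>p\<in>S. u p r * v p c)"
  shows "vec_space.rank n A \<le> card S"
proof -
  obtain xs where xs: "set xs = S" "distinct xs" using finite_distinct_list[OF assms(1)] by blast
  define R where "R p = mat n nc (\<lambda>(r,c). u p r * v p c)" for p
  let ?Ms = "map R xs"
  have car: "\<forall>M\<in>set ?Ms. M \<in> carrier_mat n nc" by (auto simp: R_def)
  have A: "A = foldr (+) ?Ms (0\<^sub>m n nc)"
  proof (rule eq_matI)
    fix r c assume rc: "r < dim_row (foldr (+) ?Ms (0\<^sub>m n nc))" "c < dim_col (foldr (+) ?Ms (0\<^sub>m n nc))"
    then have rc': "r < n" "c < nc" using foldr_carrier[OF car] by auto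
    have "foldr (+) ?Ms (0\<^sub>m n nc) $$ (r, c) = sum_list (map (\<lambda>M. M $$ (r, c)) ?Ms)"
      by (rule foldr_entry[OF car rc'])
    also have "\<dots> = sum_list (map (\<lambda>p. u p r * v p c) xs)"
      using rc' by (simp add: R_def comp_def)
    also have "\<dots> = (\<Sum>p\<in>S. u p r * v p c)" using xs by (simp add: sum_list_distinct_conv_sum_set)
    finally show "A $$ (r, c) = foldr (+) ?Ms (0\<^sub>m n nc) $$ (r, c)" using assms(3)[OF rc'] by simp
  qed (use assms(2) foldr_carrier[OF car] in auto)
  have r1: "\<And>p. vec_space.rank n (R p) \<le> 1"
    by (rule vec_space.rank_le_1_product_entries[of _ n nc "u p" "v p" for p]) (auto simp: R_def)
  have "vec_space.rank n A \<le> sum_list (map (vec_space.rank n) ?Ms)"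
    unfolding A by (rule foldr_rank[OF car])
  also have "\<dots> \<le> sum_list (map (\<lambda>_. 1::nat) xs)"
  proof (induction xs)
    case Nil then show ?case by simp
  next
    case (Cons a ys)
    have "vec_space.rank n (R a) \<le> 1" by (rule r1)
    with Cons show ?case by simp
  qed
  also have "\<dots> = card S" using xs distinct_card[OF xs(2)] by (simp add: sum_list_triv)
  finally show ?thesis .
qed


definition Spairs :: "nat \<Rightarrow> (nat \<times> nat) set" where
  "Spairs \<kappa> = {(i,j). i \<le> j \<and> j < \<kappa>}"

lemma Spairs_finite: "finite (Spairs \<kappa>)"
proof -
  have "Spairs \<kappa> \<subseteq> {..<\<kappa>} \<times> {..<\<kappa>}" by (auto simp: Spairs_def)
  then show ?thesis by (rule finite_subset) simp
qed

lemma Spairs_card: "card (Spairs \<kappa>) = (\<kappa> + 1) choose 2"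
proof (induction \<kappa>)
  case 0
  have "Spairs 0 = {}" by (auto simp: Spairs_def)
  then show ?case by simp
next
  case (Suc k)
  have e: "Spairs (Suc k) = Spairs k \<union> (\<lambda>i. (i, k)) ` {..k}" by (auto simp: Spairs_def)
  have d: "Spairs k \<inter> (\<lambda>i. (i, k)) ` {..k} = {}" by (auto simp: Spairs_def)
  have "card (Spairs (Suc k)) = card (Spairs k) + card ((\<lambda>i. (i, k)) ` {..k})"
    unfolding e by (rule card_Un_disjoint) (use Spairs_finite d in auto)
  also have "card ((\<lambda>i. (i, k)) ` {..k}) = k + 1" by (subst card_image) (auto simp: inj_on_def)
  finally have C: "card (Spairs (Suc k)) = card (Spairs k) + (k + 1)" .
  have B: "(k + 1 choose 2) + (k + 1) = (Suc k + 1) choose 2"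
  proof -
    have "Suc (Suc k) choose (Suc 1) = (Suc k choose 1) + (Suc k choose (Suc 1))" by (rule binomial_Suc_Suc)
    then have "Suc (Suc k) choose 2 = Suc k + (Suc k choose 2)" by (simp add: numeral_2_eq_2)
    then show ?thesis by simp
  qed
  show ?case using Suc C B by simp
qed

lemma pair_collapse:
  fixes F :: "nat \<times> nat \<Rightarrow> 'a::comm_monoid_add"
  assumes "x < \<kappa> * \<kappa>"
  shows "(\<Sum>p\<in>Spairs \<kappa>. if x = fst p * \<kappa> + snd p \<or> x = snd p * \<kappa> + fst p then F p else 0)
       = F (min (x div \<kappa>) (x mod \<kappa>), max (x div \<kappa>) (x mod \<kappa>))"
proof -
  let ?a = "x div \<kappa>" and ?b = "x mod \<kappa>"
  let ?p0 = "(min ?a ?b, max ?a ?b)"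
  have ab: "?a < \<kappa>" "?b < \<kappa>" using assms by (auto simp: less_mult_imp_div_less) (cases \<kappa>; auto)
  have x: "x = ?a * \<kappa> + ?b" by simp
  have iff: "\<And>p. p \<in> Spairs \<kappa> \<Longrightarrow> (x = fst p * \<kappa> + snd p \<or> x = snd p * \<kappa> + fst p) = (p = ?p0)"
  proof -
    fix p assume p: "p \<in> Spairs \<kappa>"
    obtain i j where pij: "p = (i, j)" by (cases p)
    have ij: "i \<le> j" "j < \<kappa>" using p pij by (auto simp: Spairs_def)
    have e1: "(x = i * \<kappa> + j) = (?a = i \<and> ?b = j)"
    proof
      assume "x = i * \<kappa> + j" then show "?a = i \<and> ?b = j" using ij by auto
    next
      assume "?a = i \<and> ?b = j" then show "x = i * \<kappa> + j" using x by simp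
    qed
    have e2: "(x = j * \<kappa> + i) = (?a = j \<and> ?b = i)"
    proof
      assume "x = j * \<kappa> + i" then show "?a = j \<and> ?b = i" using ij by auto
    next
      assume "?a = j \<and> ?b = i" then show "x = j * \<kappa> + i" using x by simp
    qed
    show "(x = fst p * \<kappa> + snd p \<or> x = snd p * \<kappa> + fst p) = (p = ?p0)"
      unfolding pij fst_conv snd_conv e1 e2 using ij by (auto simp: min_def max_def)
  qed
  have p0: "?p0 \<in> Spairs \<kappa>" using ab by (auto simp: Spairs_def)
  have "(\<Sum>p\<in>Spairs \<kappa>. if x = fst p * \<kappa> + snd p \<or> x = snd p * \<kappa> + fst p then F p else 0)
      = (\<Sum>p\<in>Spairs \<kappa>. if p = ?p0 then F p else 0)"
    by (rule sum.cong) (auto simp: iff simp del: min_def max_def)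
  also have "\<dots> = F ?p0" using p0 Spairs_finite by (simp add: sum.delta')
  finally show ?thesis .
qed

lemma rank_sym_rows:
  fixes A :: "real mat"
  assumes "A \<in> carrier_mat (\<kappa>*\<kappa>) (\<kappa>*\<kappa>)"
    and "\<And>i j c. i < \<kappa> \<Longrightarrow> j < \<kappa> \<Longrightarrow> c < \<kappa>*\<kappa> \<Longrightarrow> A $$ (i*\<kappa>+j, c) = A $$ (j*\<kappa>+i, c)"
  shows "vec_space.rank (\<kappa>*\<kappa>) A \<le> (\<kappa> + 1) choose 2"
proof -
  have "vec_space.rank (\<kappa>*\<kappa>) A \<le> card (Spairs \<kappa>)"
  proof (rule rank_sum_rank1[OF Spairs_finite assms(1)])
    fix r c assume rc: "r < \<kappa>*\<kappa>" "c < \<kappa>*\<kappa>"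
    let ?a = "r div \<kappa>" and ?b = "r mod \<kappa>"
    have ab: "?a < \<kappa>" "?b < \<kappa>" using rc by (auto simp: less_mult_imp_div_less) (cases \<kappa>; auto)
    have "(\<Sum>p\<in>Spairs \<kappa>. (if r = fst p * \<kappa> + snd p \<or> r = snd p * \<kappa> + fst p then 1 else 0) * A $$ (fst p * \<kappa> + snd p, c))
       = (\<Sum>p\<in>Spairs \<kappa>. if r = fst p * \<kappa> + snd p \<or> r = snd p * \<kappa> + fst p then A $$ (fst p * \<kappa> + snd p, c) else 0)"
      by (rule sum.cong) auto
    also have "\<dots> = A $$ (min ?a ?b * \<kappa> + max ?a ?b, c)"
      by (rule pair_collapse[OF rc(1), where F = "\<lambda>p. A $$ (fst p * \<kappa> + snd p, c)", simplified])
    also have "\<dots> = A $$ (r, c)"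
    proof (cases "?a \<le> ?b")
      case True then show ?thesis by simp
    next
      case False
      then have "A $$ (min ?a ?b * \<kappa> + max ?a ?b, c) = A $$ (?b * \<kappa> + ?a, c)" by simp
      also have "\<dots> = A $$ (?a * \<kappa> + ?b, c)" using assms(2)[OF ab(2) ab(1) rc(2)] .
      finally show ?thesis by simp
    qed
    finally show "A $$ (r, c) = (\<Sum>p\<in>Spairs \<kappa>. (if r = fst p * \<kappa> + snd p \<or> r = snd p * \<kappa> + fst p then 1 else 0) * A $$ (fst p * \<kappa> + snd p, c))"
      by simp
  qed
  then show ?thesis using Spairs_card by simp
qed

lemma rank_sym_cols:
  fixes A :: "real mat"
  assumes "A \<in> carrier_mat (\<kappa>*\<kappa>) (\<kappa>*\<kappa>)"
    and "\<And>i j r. i < \<kappa> \<Longrightarrow> j < \<kappa> \<Longrightarrow> r < \<kappa>*\<kappa> \<Longrightarrow> A $$ (r, i*\<kappa>+j) = A $$ (r, j*\<kappa>+i)"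
  shows "vec_space.rank (\<kappa>*\<kappa>) A \<le> (\<kappa> + 1) choose 2"
proof -
  have "vec_space.rank (\<kappa>*\<kappa>) A \<le> card (Spairs \<kappa>)"
  proof (rule rank_sum_rank1[OF Spairs_finite assms(1)])
    fix r c assume rc: "r < \<kappa>*\<kappa>" "c < \<kappa>*\<kappa>"
    let ?a = "c div \<kappa>" and ?b = "c mod \<kappa>"
    have ab: "?a < \<kappa>" "?b < \<kappa>" using rc by (auto simp: less_mult_imp_div_less) (cases \<kappa>; auto)
    have "(\<Sum>p\<in>Spairs \<kappa>. A $$ (r, fst p * \<kappa> + snd p) * (if c = fst p * \<kappa> + snd p \<or> c = snd p * \<kappa> + fst p then 1 else 0))
       = (\<Sum>p\<in>Spairs \<kappa>. if c = fst p * \<kappa> + snd p \<or> c = snd p * \<kappa> + fst p then A $$ (r, fst p * \<kappa> + snd p) else 0)"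
      by (rule sum.cong) auto
    also have "\<dots> = A $$ (r, min ?a ?b * \<kappa> + max ?a ?b)"
      by (rule pair_collapse[OF rc(2), where F = "\<lambda>p. A $$ (r, fst p * \<kappa> + snd p)", simplified])
    also have "\<dots> = A $$ (r, c)"
    proof (cases "?a \<le> ?b")
      case True then show ?thesis by simp
    next
      case False
      then have "A $$ (r, min ?a ?b * \<kappa> + max ?a ?b) = A $$ (r, ?b * \<kappa> + ?a)" by simp
      also have "\<dots> = A $$ (r, ?a * \<kappa> + ?b)" using assms(2)[OF ab(2) ab(1) rc(1)] .
      finally show ?thesis by simp
    qed
    finally show "A $$ (r, c) = (\<Sum>p\<in>Spairs \<kappa>. A $$ (r, fst p * \<kappa> + snd p) * (if c = fst p * \<kappa> + snd p \<or> c = snd p * \<kappa> + fst p then 1 else 0))"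
      by simp
  qed
  then show ?thesis using Spairs_card by simp
qed


lemma pf_const: "(\<lambda>P. c) \<in> poly_fun" by (rule poly_fun.const)

lemma pf_sum:
  assumes "\<And>x. x \<in> S \<Longrightarrow> g x \<in> poly_fun"
  shows "(\<lambda>P. \<Sum>x\<in>S. g x P) \<in> poly_fun"
proof (cases "finite S")
  case True
  then show ?thesis using assms
  proof (induction S rule: finite_induct)
    case empty then show ?case by (simp add: pf_const)
  next
    case (insert x F)
    have e: "(\<lambda>P. \<Sum>y\<in>insert x F. g y P) = (\<lambda>P. g x P + (\<Sum>y\<in>F. g y P))"
      using insert.hyps by (simp add: fun_eq_iff)
    have gx: "(\<lambda>P. g x P) \<in> poly_fun" using insert.prems by simp
    show ?case unfolding e by (rule poly_fun.add[OF gx insert.IH]) (use insert.prems in auto)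
  qed
next
  case False
  then show ?thesis by (simp add: pf_const)
qed

lemma pf_prod:
  assumes "\<And>x. x \<in> S \<Longrightarrow> g x \<in> poly_fun"
  shows "(\<lambda>P. \<Prod>x\<in>S. g x P) \<in> poly_fun"
proof (cases "finite S")
  case True
  then show ?thesis using assms
  proof (induction S rule: finite_induct)
    case empty then show ?case by (simp add: pf_const)
  next
    case (insert x F)
    have e: "(\<lambda>P. \<Prod>y\<in>insert x F. g y P) = (\<lambda>P. g x P * (\<Prod>y\<in>F. g y P))"
      using insert.hyps by (simp add: fun_eq_iff)
    have gx: "(\<lambda>P. g x P) \<in> poly_fun" using insert.prems by simp
    show ?case unfolding e by (rule poly_fun.mult[OF gx insert.IH]) (use insert.prems in auto)
  qed
next
  case False
  then show ?thesis by (simp add: pf_const)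
qed

lemma pf_marg: "(\<lambda>P. marg X \<kappa> P Y s) \<in> poly_fun"
proof (cases "s \<in> assignments Y \<kappa>")
  case True
  then have e: "(\<lambda>P. marg X \<kappa> P Y s) = (\<lambda>P. \<Sum>t\<in>{t \<in> assignments X \<kappa>. restrict t Y = s}. P t)"
    by (simp add: marg_def fun_eq_iff)
  show ?thesis unfolding e by (rule pf_sum) (rule poly_fun.coord)
next
  case False
  then have e: "(\<lambda>P. marg X \<kappa> P Y s) = (\<lambda>P. 0)" by (simp add: marg_def fun_eq_iff)
  show ?thesis unfolding e by (rule pf_const)
qed

lemma pf_det_flat: "(\<lambda>P. det (flat \<kappa> (marg X \<kappa> P Y) x y z w)) \<in> poly_fun"
proof -
  let ?n = "\<kappa> * \<kappa>"
  let ?m = "\<lambda>P i j. marg X \<kappa> P Y (asg4 x y z w (i div \<kappa>) (i mod \<kappa>) (j div \<kappa>) (j mod \<kappa>))"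
  have e: "(\<lambda>P. det (flat \<kappa> (marg X \<kappa> P Y) x y z w)) =
     (\<lambda>P. \<Sum>p\<in>{p. p permutes {0..<?n}}. signof p * (\<Prod>i\<in>{0..<?n}. ?m P i (p i)))"
  proof
    fix P
    have "det (flat \<kappa> (marg X \<kappa> P Y) x y z w) =
       (\<Sum>p\<in>{p. p permutes {0..<?n}}. signof p * (\<Prod>i\<in>{0..<?n}. flat \<kappa> (marg X \<kappa> P Y) x y z w $$ (i, p i)))"
    proof -
      have d: "dim_row (flat \<kappa> (marg X \<kappa> P Y) x y z w) = ?n" "dim_col (flat \<kappa> (marg X \<kappa> P Y) x y z w) = ?n"
        by (simp_all add: flat_def)
      show ?thesis unfolding det_def d by simp
    qed
    also have "\<dots> = (\<Sum>p\<in>{p. p permutes {0..<?n}}. signof p * (\<Prod>i\<in>{0..<?n}. ?m P i (p i)))"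
    proof (rule sum.cong[OF refl])
      fix p assume p: "p \<in> {p. p permutes {0..<?n}}"
      have "(\<Prod>i\<in>{0..<?n}. flat \<kappa> (marg X \<kappa> P Y) x y z w $$ (i, p i)) = (\<Prod>i\<in>{0..<?n}. ?m P i (p i))"
      proof (rule prod.cong[OF refl])
        fix i assume i: "i \<in> {0..<?n}"
        have pp: "p permutes {0..<?n}" using p by simp
        have "p i \<in> {0..<?n}" using permutes_in_image[OF pp, of i] i by simp
        then have "p i < ?n" "i < ?n" using i by simp_all
        then show "flat \<kappa> (marg X \<kappa> P Y) x y z w $$ (i, p i) = ?m P i (p i)" unfolding flat_def by (subst index_mat) simp_all
      qed
      then show "signof p * (\<Prod>i\<in>{0..<?n}. flat \<kappa> (marg X \<kappa> P Y) x y z w $$ (i, p i)) = signof p * (\<Prod>i\<in>{0..<?n}. ?m P i (p i))"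
        by simp
    qed
    finally show "det (flat \<kappa> (marg X \<kappa> P Y) x y z w) = (\<Sum>p\<in>{p. p permutes {0..<?n}}. signof p * (\<Prod>i\<in>{0..<?n}. ?m P i (p i)))" .
  qed
  show ?thesis unfolding e
  proof (rule pf_sum)
    fix p
    show "(\<lambda>P. signof p * (\<Prod>i\<in>{0..<?n}. ?m P i (p i))) \<in> poly_fun"
      by (rule poly_fun.mult[OF pf_const pf_prod]) (rule pf_marg)
  qed
qed


lemma swap_asg4_ab:
  assumes "distinct [a,b,c,d]"
  shows "swap_idx (asg4 a b c d i j k l) a b = asg4 a b c d j i k l"
  using assms by (auto simp: swap_idx_def asg4_def fun_eq_iff)

lemma swap_asg4_cd:
  assumes "distinct [a,b,c,d]"
  shows "swap_idx (asg4 a b c d i j k l) c d = asg4 a b c d i j l k"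
  using assms by (auto simp: swap_idx_def asg4_def fun_eq_iff)

lemma flat_entry:
  assumes "r < \<kappa>*\<kappa>" "c < \<kappa>*\<kappa>"
  shows "flat \<kappa> P x y z w $$ (r, c) = P (asg4 x y z w (r div \<kappa>) (r mod \<kappa>) (c div \<kappa>) (c mod \<kappa>))"
  using assms by (simp add: flat_def)

lemma flat_carrier: "flat \<kappa> P x y z w \<in> carrier_mat (\<kappa>*\<kappa>) (\<kappa>*\<kappa>)"
  by (simp add: flat_def)

lemma ij_lt: "i < \<kappa> \<Longrightarrow> j < (\<kappa>::nat) \<Longrightarrow> i*\<kappa>+j < \<kappa>*\<kappa>"
proof -
  assume "i < \<kappa>" "j < \<kappa>"
  then have "i*\<kappa>+j < (i+1)*\<kappa>" by simp
  also have "\<dots> \<le> \<kappa>*\<kappa>" by (rule mult_le_mono1) (use \<open>i < \<kappa>\<close> in simp)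
  finally show ?thesis .
qed

lemma UE_swap:
  assumes "P \<in> UE \<kappa> T" "Y \<subseteq> leaves T" "induced T Y = Some T'" "{x, y} \<in> two_clades T'" "s \<in> assignments Y \<kappa>"
  shows "marg (leaves T) \<kappa> P Y (swap_idx s x y) = marg (leaves T) \<kappa> P Y s"
  using assms unfolding UE_def by blast

lemma part1_rows:
  assumes "P \<in> UE \<kappa> T" "{a,b,c,d} \<subseteq> leaves T" "induced T {a,b,c,d} = Some T'" "{a, b} \<in> two_clades T'"
    "distinct [a,b,c,d]"
  shows "mat_rank (flat \<kappa> (marg (leaves T) \<kappa> P {a,b,c,d}) a b c d) \<le> (\<kappa> + 1) choose 2"
proof -
  let ?F = "flat \<kappa> (marg (leaves T) \<kappa> P {a,b,c,d}) a b c d"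
  have "vec_space.rank (\<kappa>*\<kappa>) ?F \<le> (\<kappa> + 1) choose 2"
  proof (rule rank_sym_rows[OF flat_carrier])
    fix i j c' assume h: "i < \<kappa>" "j < \<kappa>" "c' < \<kappa>*\<kappa>"
    have cc: "c' div \<kappa> < \<kappa>" "c' mod \<kappa> < \<kappa>" using divmod_lt[OF h(3)] by auto
    let ?s = "asg4 a b c d i j (c' div \<kappa>) (c' mod \<kappa>)"
    have m: "?s \<in> assignments {a,b,c,d} \<kappa>" using asg4_mem[OF h(1,2) cc] .
    have "?F $$ (i*\<kappa>+j, c') = marg (leaves T) \<kappa> P {a,b,c,d} ?s"
      using flat_entry[OF ij_lt[OF h(1,2)] h(3)] h by simp
    also have "\<dots> = marg (leaves T) \<kappa> P {a,b,c,d} (swap_idx ?s a b)"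
      using UE_swap[OF assms(1,2,3,4) m] by simp
    also have "swap_idx ?s a b = asg4 a b c d j i (c' div \<kappa>) (c' mod \<kappa>)" by (rule swap_asg4_ab[OF assms(5)])
    also have "marg (leaves T) \<kappa> P {a,b,c,d} (asg4 a b c d j i (c' div \<kappa>) (c' mod \<kappa>)) = ?F $$ (j*\<kappa>+i, c')"
    proof -
      have E: "?F $$ (j*\<kappa>+i, c') = marg (leaves T) \<kappa> P {a,b,c,d} (asg4 a b c d ((j*\<kappa>+i) div \<kappa>) ((j*\<kappa>+i) mod \<kappa>) (c' div \<kappa>) (c' mod \<kappa>))"
        by (rule flat_entry[OF ij_lt[OF h(2,1)] h(3)])
      have dm: "(j*\<kappa>+i) div \<kappa> = j" "(j*\<kappa>+i) mod \<kappa> = i" using h by auto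
      show ?thesis unfolding E dm by (rule refl)
    qed
    finally show "?F $$ (i*\<kappa>+j, c') = ?F $$ (j*\<kappa>+i, c')" .
  qed
  then show ?thesis by (simp add: mat_rank_def flat_def)
qed

lemma part1_cols:
  assumes "P \<in> UE \<kappa> T" "{a,b,c,d} \<subseteq> leaves T" "induced T {a,b,c,d} = Some T'" "{c, d} \<in> two_clades T'"
    "distinct [a,b,c,d]"
  shows "mat_rank (flat \<kappa> (marg (leaves T) \<kappa> P {a,b,c,d}) a b c d) \<le> (\<kappa> + 1) choose 2"
proof -
  let ?F = "flat \<kappa> (marg (leaves T) \<kappa> P {a,b,c,d}) a b c d"
  have "vec_space.rank (\<kappa>*\<kappa>) ?F \<le> (\<kappa> + 1) choose 2"
  proof (rule rank_sym_cols[OF flat_carrier])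
    fix i j r assume h: "i < \<kappa>" "j < \<kappa>" "r < \<kappa>*\<kappa>"
    have rr: "r div \<kappa> < \<kappa>" "r mod \<kappa> < \<kappa>" using divmod_lt[OF h(3)] by auto
    let ?s = "asg4 a b c d (r div \<kappa>) (r mod \<kappa>) i j"
    have m: "?s \<in> assignments {a,b,c,d} \<kappa>" using asg4_mem[OF rr h(1,2)] .
    have "?F $$ (r, i*\<kappa>+j) = marg (leaves T) \<kappa> P {a,b,c,d} ?s"
      using flat_entry[OF h(3) ij_lt[OF h(1,2)]] h by simp
    also have "\<dots> = marg (leaves T) \<kappa> P {a,b,c,d} (swap_idx ?s c d)"
      using UE_swap[OF assms(1,2,3,4) m] by simp
    also have "swap_idx ?s c d = asg4 a b c d (r div \<kappa>) (r mod \<kappa>) j i" by (rule swap_asg4_cd[OF assms(5)])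
    also have "marg (leaves T) \<kappa> P {a,b,c,d} (asg4 a b c d (r div \<kappa>) (r mod \<kappa>) j i) = ?F $$ (r, j*\<kappa>+i)"
    proof -
      have E: "?F $$ (r, j*\<kappa>+i) = marg (leaves T) \<kappa> P {a,b,c,d} (asg4 a b c d (r div \<kappa>) (r mod \<kappa>) ((j*\<kappa>+i) div \<kappa>) ((j*\<kappa>+i) mod \<kappa>))"
        by (rule flat_entry[OF h(3) ij_lt[OF h(2,1)]])
      have dm: "(j*\<kappa>+i) div \<kappa> = j" "(j*\<kappa>+i) mod \<kappa> = i" using h by auto
      show ?thesis unfolding E dm by (rule refl)
    qed
    finally show "?F $$ (r, i*\<kappa>+j) = ?F $$ (r, j*\<kappa>+i)" .
  qed
  then show ?thesis by (simp add: mat_rank_def flat_def)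
qed

lemma rank_full_of_det:
  assumes "det (flat \<kappa> P x y z w) \<noteq> 0"
  shows "mat_rank (flat \<kappa> P x y z w) = \<kappa>\<^sup>2"
proof -
  have iff: "det (flat \<kappa> P x y z w) \<noteq> 0 \<longleftrightarrow> vec_space.rank (\<kappa>*\<kappa>) (flat \<kappa> P x y z w) = \<kappa>*\<kappa>"
    by (rule vec_space.det_rank_iff[OF flat_carrier])
  have "vec_space.rank (\<kappa>*\<kappa>) (flat \<kappa> P x y z w) = \<kappa>*\<kappa>"
    using iff assms by simp
  then show ?thesis by (simp add: mat_rank_def flat_def power2_eq_square)
qed

theorem theorem3p3:
  fixes \<kappa> :: nat and \<psi> :: "'a rtree" and a b c d :: 'a
  assumes "\<kappa> \<ge> 2"
    and "well_labelled \<psi>"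
    and "a \<in> leaves \<psi>" and "b \<in> leaves \<psi>" and "c \<in> leaves \<psi>" and "d \<in> leaves \<psi>"
    and "distinct [a, b, c, d]"
    and "quartet_topology \<psi> a b c d"
  shows "(\<forall>P \<in> UE \<kappa> \<psi>.
            mat_rank (flat \<kappa> (marg (leaves \<psi>) \<kappa> P {a, b, c, d}) a b c d) \<le> (\<kappa> + 1) choose 2)
       \<and> generic_on (UE \<kappa> \<psi>) (\<lambda>P.
            mat_rank (flat \<kappa> (marg (leaves \<psi>) \<kappa> P {a, b, c, d}) a c b d) = \<kappa>\<^sup>2
          \<and> mat_rank (flat \<kappa> (marg (leaves \<psi>) \<kappa> P {a, b, c, d}) a d b c) = \<kappa>\<^sup>2)"
proof -
  have k0: "0 < \<kappa>" using assms(1) by simp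
  let ?Y = "{a, b, c, d}"
  let ?X = "leaves \<psi>"
  have Ysub: "?Y \<subseteq> ?X" using assms(3-6) by auto
  obtain T' where ind: "induced \<psi> ?Y = Some T'" and spl: "{{a,b},{c,d}} \<in> unrooted_splits T'"
    using assms(8) unfolding quartet_topology_def by blast
  obtain C where C: "{{a,b},{c,d}} = {C, leaves T' - C}" "C \<in> clusters T'"
    using spl unfolding unrooted_splits_def by blast
  have "C \<in> {{a,b},{c,d}}" unfolding C(1) by simp
  then have Cc: "C = {a,b} \<or> C = {c,d}" by simp
  have ab: "a \<noteq> b" "c \<noteq> d" using assms(7) by auto
  obtain S where S: "S \<in> subtrees \<psi>" "leaves S \<inter> ?Y = C" using clusters_induced[OF ind C(2)] by metis
  let ?f = "\<lambda>P. det (flat \<kappa> (marg ?X \<kappa> P ?Y) a c b d) * det (flat \<kappa> (marg ?X \<kappa> P ?Y) a d b c)"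
  have fpoly: "?f \<in> poly_fun" by (rule poly_fun.mult[OF pf_det_flat pf_det_flat])
  let ?P0 = "Pw \<kappa> (htV (leaves S)) \<psi>"
  have P0UE: "?P0 \<in> UE \<kappa> \<psi>" by (rule Pw_UE[OF assms(2) k0])
  from Cc show ?thesis
  proof
    assume Cab: "C = {a,b}"
    have tc: "{a,b} \<in> two_clades T'" using C(2) Cab ab by (simp add: two_clades_def)
    have part1: "\<forall>P \<in> UE \<kappa> \<psi>. mat_rank (flat \<kappa> (marg ?X \<kappa> P ?Y) a b c d) \<le> (\<kappa> + 1) choose 2"
      using part1_rows[OF _ Ysub ind tc assms(7)] by blast
    have form: "\<And>s. s \<in> assignments ?Y \<kappa> \<Longrightarrow> marg ?X \<kappa> ?P0 ?Y s = (if s a = s b then Phi \<kappa> (s a) (s c) (s d) else 0)"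
      by (rule quartet_marg[OF assms(2) k0 S(1)]) (use S(2) Cab assms(7) Ysub in auto)
    have F1: "flat \<kappa> (marg ?X \<kappa> ?P0 ?Y) a c b d = A1 \<kappa>" "flat \<kappa> (marg ?X \<kappa> ?P0 ?Y) a d b c = A1 \<kappa>"
      using flat_A1[OF assms(7) form] by auto
    have "?f ?P0 \<noteq> 0" unfolding F1 using det_A1[OF k0] by simp
    then have gen: "generic_on (UE \<kappa> \<psi>) (\<lambda>P.
            mat_rank (flat \<kappa> (marg ?X \<kappa> P ?Y) a c b d) = \<kappa>\<^sup>2
          \<and> mat_rank (flat \<kappa> (marg ?X \<kappa> P ?Y) a d b c) = \<kappa>\<^sup>2)"
      unfolding generic_on_def using fpoly P0UE rank_full_of_det by (intro bexI[of _ ?f]) auto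
    show ?thesis using part1 gen by blast
  next
    assume Ccd: "C = {c,d}"
    have tc: "{c,d} \<in> two_clades T'" using C(2) Ccd ab by (simp add: two_clades_def)
    have part1: "\<forall>P \<in> UE \<kappa> \<psi>. mat_rank (flat \<kappa> (marg ?X \<kappa> P ?Y) a b c d) \<le> (\<kappa> + 1) choose 2"
      using part1_cols[OF _ Ysub ind tc assms(7)] by blast
    have d2: "distinct [c,d,a,b]" using assms(7) by auto
    have form: "\<And>s. s \<in> assignments ?Y \<kappa> \<Longrightarrow> marg ?X \<kappa> ?P0 ?Y s = (if s c = s d then Phi \<kappa> (s c) (s a) (s b) else 0)"
      by (rule quartet_marg[OF assms(2) k0 S(1)]) (use S(2) Ccd d2 Ysub in auto)
    have F2: "flat \<kappa> (marg ?X \<kappa> ?P0 ?Y) a c b d = A2 \<kappa>" "flat \<kappa> (marg ?X \<kappa> ?P0 ?Y) a d b c = A2 \<kappa>"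
      using flat_A2[OF assms(7) form] by auto
    have "?f ?P0 \<noteq> 0" unfolding F2 using det_A2[OF k0] by simp
    then have gen: "generic_on (UE \<kappa> \<psi>) (\<lambda>P.
            mat_rank (flat \<kappa> (marg ?X \<kappa> P ?Y) a c b d) = \<kappa>\<^sup>2
          \<and> mat_rank (flat \<kappa> (marg ?X \<kappa> P ?Y) a d b c) = \<kappa>\<^sup>2)"
      unfolding generic_on_def using fpoly P0UE rank_full_of_det by (intro bexI[of _ ?f]) auto
    show ?thesis using part1 gen by blast
  qed
qed


end
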